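(* Let $X$ be a compact nonpositively curved cube complex and $(\tilde Y,\phi)$ a quasiline in $\tilde X$. Then for each hyperplane $H$ of $\tilde Y$: (1) $H$ is trivial if and only if $\operatorname{diam}(H)=\infty$; (2) $H$ is half-essential if and only if it has a compact halfspace; (3) $H$ is essential if and only if $\operatorname{diam}(H)<\infty$ and both halfspaces of $H$ are noncompact.
   Context: $\tilde X$ is the universal cover of $X$. A quasiline in $\tilde X$ is a pair $(\tilde Y,\phi)$ with $\tilde Y\subset\tilde X$ a convex subcomplex and $\phi\in\pi_1X$ nontrivial such that $\langle\phi\rangle$ acts cocompactly on $\tilde Y$. Hyperplanes of $\tilde Y$ and their two halfspaces (components of the complement of the open carrier) are taken in the CAT(0) cube complex $\tilde Y$. A halfspace of $H$ is deep if it contains points arbitrarily far from $H$, shallow otherwise. $H$ is essential if both halfspaces are deep, trivial if both are shallow, half-essential if exactly one is deep. *)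

theory Defs
  imports "HOL-Algebra.Group" "HOL-Library.Extended_Nat"
begin

text \<open>CAT(0) cube complexes are modelled by their 1-skeleta (median graphs).
  A graph is a vertex set V with an adjacency relation E.\<close>

definition is_graph :: "'v set \<Rightarrow> ('v \<Rightarrow> 'v \<Rightarrow> bool) \<Rightarrow> bool" where
  "is_graph V E \<longleftrightarrow> (\<forall>x y. E x y \<longrightarrow> x \<in> V \<and> y \<in> V \<and> E y x \<and> x \<noteq> y)"

definition is_path :: "'v set \<Rightarrow> ('v \<Rightarrow> 'v \<Rightarrow> bool) \<Rightarrow> 'v list \<Rightarrow> bool" where
  "is_path V E xs \<longleftrightarrow> xs \<noteq> [] \<and> set xs \<subseteq> V \<and>
     (\<forall>i. Suc i < length xs \<longrightarrow> E (xs ! i) (xs ! Suc i))"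

definition connected_graph :: "'v set \<Rightarrow> ('v \<Rightarrow> 'v \<Rightarrow> bool) \<Rightarrow> bool" where
  "connected_graph V E \<longleftrightarrow>
     (\<forall>x\<in>V. \<forall>y\<in>V. \<exists>xs. is_path V E xs \<and> hd xs = x \<and> last xs = y)"

definition gdist :: "'v set \<Rightarrow> ('v \<Rightarrow> 'v \<Rightarrow> bool) \<Rightarrow> 'v \<Rightarrow> 'v \<Rightarrow> nat" where
  "gdist V E x y = (LEAST n. \<exists>xs. is_path V E xs \<and> hd xs = x \<and> last xs = y \<and> length xs = Suc n)"

definition interval :: "'v set \<Rightarrow> ('v \<Rightarrow> 'v \<Rightarrow> bool) \<Rightarrow> 'v \<Rightarrow> 'v \<Rightarrow> 'v set" where
  "interval V E x y = {w\<in>V. gdist V E x w + gdist V E w y = gdist V E x y}"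

definition median_graph :: "'v set \<Rightarrow> ('v \<Rightarrow> 'v \<Rightarrow> bool) \<Rightarrow> bool" where
  "median_graph V E \<longleftrightarrow> is_graph V E \<and> connected_graph V E \<and>
     (\<forall>x\<in>V. \<forall>y\<in>V. \<forall>z\<in>V. \<exists>!m. m \<in> interval V E x y \<inter> interval V E y z \<inter> interval V E x z)"

definition is_cube :: "'v set \<Rightarrow> ('v \<Rightarrow> 'v \<Rightarrow> bool) \<Rightarrow> 'v set \<Rightarrow> bool" where
  "is_cube V E S \<longleftrightarrow> S \<subseteq> V \<and> (\<exists>(n::nat) (f::'v \<Rightarrow> nat set). bij_betw f S (Pow {..<n}) \<and>
     (\<forall>a\<in>S. \<forall>b\<in>S. E a b \<longleftrightarrow> card ((f a - f b) \<union> (f b - f a)) = 1))"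

text \<open>Convex subcomplex (given by its vertex set; the subcomplex is the full one on it).\<close>
definition convex_subcomplex :: "'v set \<Rightarrow> ('v \<Rightarrow> 'v \<Rightarrow> bool) \<Rightarrow> 'v set \<Rightarrow> bool" where
  "convex_subcomplex V E Y \<longleftrightarrow> Y \<subseteq> V \<and> (\<forall>x\<in>Y. \<forall>y\<in>Y. interval V E x y \<subseteq> Y)"

definition cubical_action ::
  "('g, 'b) monoid_scheme \<Rightarrow> 'v set \<Rightarrow> ('v \<Rightarrow> 'v \<Rightarrow> bool) \<Rightarrow> ('g \<Rightarrow> 'v \<Rightarrow> 'v) \<Rightarrow> bool" where
  "cubical_action G V E act \<longleftrightarrow> group G \<and>
     (\<forall>g\<in>carrier G. bij_betw (act g) V V \<and> (\<forall>x\<in>V. \<forall>y\<in>V. E x y \<longleftrightarrow> E (act g x) (act g y))) \<and>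
     (\<forall>x\<in>V. act \<one>\<^bsub>G\<^esub> x = x) \<and>
     (\<forall>g\<in>carrier G. \<forall>h\<in>carrier G. \<forall>x\<in>V. act (g \<otimes>\<^bsub>G\<^esub> h) x = act g (act h x))"

text \<open>Free action on the cube complex: no nontrivial element stabilises a cube
  (equivalently, fixes a point).\<close>
definition free_action ::
  "('g, 'b) monoid_scheme \<Rightarrow> 'v set \<Rightarrow> ('v \<Rightarrow> 'v \<Rightarrow> bool) \<Rightarrow> ('g \<Rightarrow> 'v \<Rightarrow> 'v) \<Rightarrow> bool" where
  "free_action G V E act \<longleftrightarrow>
     (\<forall>g\<in>carrier G. \<forall>S. is_cube V E S \<and> act g ` S = S \<longrightarrow> g = \<one>\<^bsub>G\<^esub>)"

text \<open>Cocompact action of a set of group elements: finitely many orbits of cubes.\<close>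
definition cocompact_on ::
  "'g set \<Rightarrow> 'v set \<Rightarrow> ('v \<Rightarrow> 'v \<Rightarrow> bool) \<Rightarrow> ('g \<Rightarrow> 'v \<Rightarrow> 'v) \<Rightarrow> bool" where
  "cocompact_on K V E act \<longleftrightarrow> finite {{act g ` S | g. g \<in> K} | S. is_cube V E S}"

text \<open>Universal cover of a compact nonpositively curved cube complex X:
  a CAT(0) cube complex (median graph V, E) with pi_1 X = G acting freely and cocompactly.\<close>
definition universal_cover_of_compact_npc ::
  "('g, 'b) monoid_scheme \<Rightarrow> 'v set \<Rightarrow> ('v \<Rightarrow> 'v \<Rightarrow> bool) \<Rightarrow> ('g \<Rightarrow> 'v \<Rightarrow> 'v) \<Rightarrow> bool" where
  "universal_cover_of_compact_npc G V E act \<longleftrightarrow>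
     median_graph V E \<and> cubical_action G V E act \<and> free_action G V E act \<and>
     cocompact_on (carrier G) V E act"

definition cyclic_subgroup :: "('g, 'b) monoid_scheme \<Rightarrow> 'g \<Rightarrow> 'g set" where
  "cyclic_subgroup G \<phi> = {\<phi> [^]\<^bsub>G\<^esub> (n::int) | n. True}"

definition quasiline ::
  "('g, 'b) monoid_scheme \<Rightarrow> 'v set \<Rightarrow> ('v \<Rightarrow> 'v \<Rightarrow> bool) \<Rightarrow> ('g \<Rightarrow> 'v \<Rightarrow> 'v) \<Rightarrow> 'v set \<Rightarrow> 'g \<Rightarrow> bool" where
  "quasiline G V E act Y \<phi> \<longleftrightarrow>
     convex_subcomplex V E Y \<and> \<phi> \<in> carrier G \<and> \<phi> \<noteq> \<one>\<^bsub>G\<^esub> \<and>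
     (\<forall>g\<in>cyclic_subgroup G \<phi>. act g ` Y = Y) \<and>
     cocompact_on (cyclic_subgroup G \<phi>) Y E act"

text \<open>Hyperplanes of the cube complex with 1-skeleton (Y, E restricted to Y):
  classes of edges under the transitive closure of "opposite sides of a square".\<close>
definition edges :: "'v set \<Rightarrow> ('v \<Rightarrow> 'v \<Rightarrow> bool) \<Rightarrow> 'v set set" where
  "edges Y E = {{a, b} | a b. a \<in> Y \<and> b \<in> Y \<and> E a b}"

definition elem_parallel :: "'v set \<Rightarrow> ('v \<Rightarrow> 'v \<Rightarrow> bool) \<Rightarrow> 'v set \<Rightarrow> 'v set \<Rightarrow> bool" where
  "elem_parallel Y E e e' \<longleftrightarrow> (\<exists>a b c d. e = {a, b} \<and> e' = {c, d} \<and> {a, b, c, d} \<subseteq> Y \<and>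
      E a b \<and> E c d \<and> E a c \<and> E b d \<and> e \<inter> e' = {})"

definition hyperplanes :: "'v set \<Rightarrow> ('v \<Rightarrow> 'v \<Rightarrow> bool) \<Rightarrow> 'v set set set" where
  "hyperplanes Y E = {{e'. (elem_parallel Y E)\<^sup>*\<^sup>* e e'} | e. e \<in> edges Y E}"

text \<open>Vertices of the carrier of H (endpoints of edges dual to H).\<close>
definition carrier_vertices :: "'v set set \<Rightarrow> 'v set" where
  "carrier_vertices H = \<Union>H"

text \<open>Halfspaces of H: components of the complement of the open carrier, i.e. (full
  subcomplexes on) the components of the 1-skeleton with the edges dual to H removed.\<close>
definition halfspaces :: "'v set \<Rightarrow> ('v \<Rightarrow> 'v \<Rightarrow> bool) \<Rightarrow> 'v set set \<Rightarrow> 'v set set" where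
  "halfspaces Y E H =
     {{y\<in>Y. \<exists>xs. is_path Y (\<lambda>a b. E a b \<and> {a, b} \<notin> H) xs \<and> hd xs = x \<and> last xs = y} | x. x \<in> Y}"

definition deep :: "'v set \<Rightarrow> ('v \<Rightarrow> 'v \<Rightarrow> bool) \<Rightarrow> 'v set set \<Rightarrow> 'v set \<Rightarrow> bool" where
  "deep Y E H h \<longleftrightarrow> (\<forall>n::nat. \<exists>x\<in>h. \<forall>y\<in>carrier_vertices H. gdist Y E x y \<ge> n)"

definition essential :: "'v set \<Rightarrow> ('v \<Rightarrow> 'v \<Rightarrow> bool) \<Rightarrow> 'v set set \<Rightarrow> bool" where
  "essential Y E H \<longleftrightarrow> (\<forall>h\<in>halfspaces Y E H. deep Y E H h)"

definition trivial_hyp :: "'v set \<Rightarrow> ('v \<Rightarrow> 'v \<Rightarrow> bool) \<Rightarrow> 'v set set \<Rightarrow> bool" where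
  "trivial_hyp Y E H \<longleftrightarrow> (\<forall>h\<in>halfspaces Y E H. \<not> deep Y E H h)"

definition half_essential :: "'v set \<Rightarrow> ('v \<Rightarrow> 'v \<Rightarrow> bool) \<Rightarrow> 'v set set \<Rightarrow> bool" where
  "half_essential Y E H \<longleftrightarrow>
     (\<exists>h\<in>halfspaces Y E H. deep Y E H h) \<and> (\<exists>h\<in>halfspaces Y E H. \<not> deep Y E H h)"

definition hyp_diam :: "'v set \<Rightarrow> ('v \<Rightarrow> 'v \<Rightarrow> bool) \<Rightarrow> 'v set set \<Rightarrow> enat" where
  "hyp_diam Y E H = (SUP x\<in>carrier_vertices H. SUP y\<in>carrier_vertices H. enat (gdist Y E x y))"

text \<open>A subcomplex (full on a vertex set) is compact iff it has finitely many vertices.\<close>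
definition compact_subcomplex :: "'v set \<Rightarrow> bool" where
  "compact_subcomplex h \<longleftrightarrow> finite h"

end

theory Submission
  imports Defs
begin

lemma is_path_Cons:
  "is_path V E (x # xs) \<longleftrightarrow> x \<in> V \<and> (xs = [] \<or> (E x (hd xs) \<and> is_path V E xs))"
proof
  assume h: "is_path V E (x # xs)"
  show "x \<in> V \<and> (xs = [] \<or> (E x (hd xs) \<and> is_path V E xs))"
  proof (cases xs)
    case Nil then show ?thesis using h by (auto simp: is_path_def)
  next
    case (Cons y ys)
    have "E x y" using h Cons unfolding is_path_def by (metis One_nat_def Suc_less_eq length_Cons nth_Cons_0 nth_Cons_Suc zero_less_Suc)
    moreover have "is_path V E xs" using h Cons unfolding is_path_def
      by (auto; metis Suc_less_eq length_Cons nth_Cons_Suc)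
    ultimately show ?thesis using h Cons by (auto simp: is_path_def)
  qed
next
  assume h: "x \<in> V \<and> (xs = [] \<or> (E x (hd xs) \<and> is_path V E xs))"
  show "is_path V E (x # xs)"
  proof (cases xs)
    case Nil then show ?thesis using h by (auto simp: is_path_def)
  next
    case (Cons y ys)
    then show ?thesis using h unfolding is_path_def
      by (auto simp: less_Suc_eq_0_disj nth_Cons split: nat.splits)
  qed
qed

lemma is_path_single[simp]: "is_path V E [x] \<longleftrightarrow> x \<in> V"
  by (simp add: is_path_Cons)

lemma is_path_append:
  assumes "is_path V E xs" "is_path V E ys" "last xs = hd ys"
  shows "is_path V E (xs @ tl ys)"
  using assms
proof (induction xs)
  case Nil then show ?case by (simp add: is_path_def)
next
  case (Cons x xs)
  show ?case
  proof (cases xs)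
    case Nil
    then show ?thesis using Cons.prems by (cases ys) auto
  next
    case Cons': (Cons z zs)
    then have "is_path V E xs" "x \<in> V" "E x (hd xs)" using Cons.prems by (auto simp: is_path_Cons)
    then have "is_path V E (xs @ tl ys)" using Cons by (auto simp: Cons')
    then show ?thesis using \<open>x\<in>V\<close> \<open>E x (hd xs)\<close> Cons' by (simp add: is_path_Cons)
  qed
qed

lemma is_path_map:
  assumes "is_path V E xs" "\<And>x. x \<in> V \<Longrightarrow> f x \<in> V'" "\<And>x y. x \<in> V \<Longrightarrow> y \<in> V \<Longrightarrow> E x y \<Longrightarrow> E' (f x) (f y)"
  shows "is_path V' E' (map f xs)"
  using assms unfolding is_path_def by (auto simp: subset_iff)

lemma is_path_mono:
  assumes "is_path V E xs" "V \<subseteq> V'" "\<And>x y. x \<in> V \<Longrightarrow> y \<in> V \<Longrightarrow> E x y \<Longrightarrow> E' x y"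
  shows "is_path V' E' xs"
  using is_path_map[OF assms(1), of id V' E'] assms by auto

lemma is_path_rev:
  assumes "is_path V E xs" "\<And>x y. x \<in> V \<Longrightarrow> y \<in> V \<Longrightarrow> E x y \<Longrightarrow> E y x"
  shows "is_path V E (rev xs)"
  using assms unfolding is_path_def
proof (intro conjI allI impI)
  fix i assume h: "xs \<noteq> [] \<and> set xs \<subseteq> V \<and> (\<forall>i. Suc i < length xs \<longrightarrow> E (xs ! i) (xs ! Suc i))"
    "Suc i < length (rev xs)"
  let ?j = "length xs - Suc (Suc i)"
  have 1: "rev xs ! i = xs ! Suc ?j" using h by (simp add: rev_nth Suc_diff_Suc)
  have 2: "rev xs ! Suc i = xs ! ?j" using h by (simp add: rev_nth)
  have "E (xs ! ?j) (xs ! Suc ?j)" using h by auto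
  moreover have "xs ! ?j \<in> V" "xs ! Suc ?j \<in> V" using h by auto
  ultimately show "E (rev xs ! i) (rev xs ! Suc i)" using 1 2 assms(2) by auto
qed auto

locale mg =
  fixes V :: "'v set" and E :: "'v \<Rightarrow> 'v \<Rightarrow> bool"
  assumes sym: "\<lbrakk>x\<in>V; y\<in>V; E x y\<rbrakk> \<Longrightarrow> E y x"
    and irr: "x\<in>V \<Longrightarrow> \<not> E x x"
    and conn: "connected_graph V E"
    and med: "\<lbrakk>x\<in>V; y\<in>V; z\<in>V\<rbrakk> \<Longrightarrow>
        \<exists>!m. m \<in> interval V E x y \<inter> interval V E y z \<inter> interval V E x z"
begin

abbreviation "d \<equiv> gdist V E"
abbreviation "I \<equiv> interval V E"

lemma dist_le:
  assumes "is_path V E xs"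
  shows "d (hd xs) (last xs) \<le> length xs - 1"
proof -
  have "\<exists>ys. is_path V E ys \<and> hd ys = hd xs \<and> last ys = last xs \<and> length ys = Suc (length xs - 1)"
    using assms by (intro exI[of _ xs]) (auto simp: is_path_def)
  then show ?thesis unfolding gdist_def by (rule Least_le)
qed

lemma dist_ex:
  assumes "x \<in> V" "y \<in> V"
  shows "\<exists>xs. is_path V E xs \<and> hd xs = x \<and> last xs = y \<and> length xs = Suc (d x y)"
proof -
  obtain xs where "is_path V E xs" "hd xs = x" "last xs = y" using conn assms unfolding connected_graph_def by blast
  then have "\<exists>n xs. is_path V E xs \<and> hd xs = x \<and> last xs = y \<and> length xs = Suc n"
    by (intro exI[of _ "length xs - 1"] exI[of _ xs]) (auto simp: is_path_def)
  then show ?thesis unfolding gdist_def by (rule LeastI_ex)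
qed

lemma dist_refl[simp]: "x \<in> V \<Longrightarrow> d x x = 0"
  using dist_le[of "[x]"] by simp

lemma dist_eq0: assumes "x \<in> V" "y \<in> V" "d x y = 0" shows "x = y"
proof -
  obtain xs where "is_path V E xs" "hd xs = x" "last xs = y" "length xs = Suc 0"
    using dist_ex assms by fastforce
  then show ?thesis by (cases xs) auto
qed

lemma dist_sym: assumes "x \<in> V" "y \<in> V" shows "d x y = d y x"
proof -
  have le: "d a b \<le> d b a" if ab: "a \<in> V" "b \<in> V" for a b
  proof -
    obtain xs where xs: "is_path V E xs" "hd xs = b" "last xs = a" "length xs = Suc (d b a)"
      using dist_ex[OF ab(2,1)] by blast
    have "is_path V E (rev xs)" using xs(1) sym by (intro is_path_rev) auto
    from dist_le[OF this] xs show ?thesis by (cases xs) (auto simp: hd_rev last_rev)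
  qed
  show ?thesis using le assms by (simp add: le_antisym)
qed

lemma dist_tri: assumes "x \<in> V" "y \<in> V" "z \<in> V" shows "d x z \<le> d x y + d y z"
proof -
  obtain xs where xs: "is_path V E xs" "hd xs = x" "last xs = y" "length xs = Suc (d x y)"
    using dist_ex assms by blast
  obtain ys where ys: "is_path V E ys" "hd ys = y" "last ys = z" "length ys = Suc (d y z)"
    using dist_ex assms by blast
  have p: "is_path V E (xs @ tl ys)" using xs ys by (intro is_path_append) auto
  have "hd (xs @ tl ys) = x" using xs by (cases xs) auto
  moreover have "last (xs @ tl ys) = z" using xs ys by (cases ys) auto
  moreover have "length (xs @ tl ys) = Suc (d x y + d y z)" using xs ys by (cases ys) auto
  ultimately show ?thesis using dist_le[OF p] by simp
qed

lemma edge_dist: assumes "x \<in> V" "y \<in> V" "E x y" shows "d x y = 1"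
proof -
  have "is_path V E [x, y]" using assms by (simp add: is_path_Cons)
  from dist_le[OF this] have "d x y \<le> 1" by simp
  moreover have "x \<noteq> y" using irr assms by auto
  then have "d x y \<noteq> 0" using dist_eq0 assms by auto
  ultimately show ?thesis by simp
qed

lemma dist1_edge: assumes "x \<in> V" "y \<in> V" "d x y = 1" shows "E x y"
proof -
  obtain xs where xs: "is_path V E xs" "hd xs = x" "last xs = y" "length xs = 2"
    using dist_ex assms by fastforce
  then obtain a b where "xs = [a, b]" by (cases xs; cases "tl xs") auto
  then show ?thesis using xs by (auto simp: is_path_Cons)
qed

lemma edge_iff: "x \<in> V \<Longrightarrow> y \<in> V \<Longrightarrow> E x y \<longleftrightarrow> d x y = 1"
  using edge_dist dist1_edge by blast

lemma step_toward:
  assumes "x \<in> V" "y \<in> V" "x \<noteq> y"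
  shows "\<exists>x'\<in>V. E x x' \<and> d x' y + 1 = d x y"
proof -
  obtain xs where xs: "is_path V E xs" "hd xs = x" "last xs = y" "length xs = Suc (d x y)"
    using dist_ex assms by blast
  then obtain z zs where zs: "xs = x # z # zs" using assms
    by (cases xs; cases "tl xs") (auto simp: dist_eq0)
  have pz: "is_path V E (z # zs)" "E x z" "z \<in> V" using xs(1) zs by (auto simp: is_path_Cons)
  have "d z y \<le> length (z # zs) - 1" using dist_le[OF pz(1)] xs zs by simp
  then have "d z y + 1 \<le> d x y" using xs zs by simp
  moreover have "d x y \<le> d x z + d z y" using dist_tri assms pz by blast
  moreover have "d x z = 1" using edge_dist pz assms by blast
  ultimately show ?thesis using pz by (intro bexI[of _ z]) auto
qed

lemma edge_lip: assumes "w \<in> V" "x \<in> V" "y \<in> V" "E x y" shows "d w y \<le> d w x + 1"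
  using dist_tri[OF assms(1,2,3)] edge_dist[OF assms(2-4)] by simp

lemma bip: assumes "w \<in> V" "x \<in> V" "y \<in> V" "E x y" shows "d w x \<noteq> d w y"
proof -
  obtain m where m: "m \<in> I w x" "m \<in> I x y" "m \<in> I w y" using med[OF assms(1-3)] by blast
  have dxy: "d x y = 1" using edge_dist assms by blast
  have mV: "m \<in> V" using m by (auto simp: interval_def)
  have "d x m + d m y = 1" using m(2) dxy by (auto simp: interval_def)
  then have "d x m = 0 \<or> d m y = 0" by auto
  then have "m = x \<or> m = y" using dist_eq0 mV assms by metis
  then show ?thesis
  proof
    assume "m = x" then have "d w x + d x y = d w y" using m(3) by (auto simp: interval_def)
    then show ?thesis using dxy by simp
  next
    assume "m = y" then have "d w y + d y x = d w x" using m(1) by (auto simp: interval_def)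
    then show ?thesis using dxy dist_sym assms by simp
  qed
qed

lemma edge_step: assumes "w \<in> V" "x \<in> V" "y \<in> V" "E x y"
  shows "d w y = d w x + 1 \<or> d w x = d w y + 1"
proof -
  have "d w y \<le> d w x + 1" using edge_lip assms by blast
  moreover have "d w x \<le> d w y + 1" using edge_lip assms sym by blast
  moreover have "d w x \<noteq> d w y" using bip assms by blast
  ultimately show ?thesis by linarith
qed

end

context mg
begin

lemma in_I: "z \<in> I x y \<longleftrightarrow> z \<in> V \<and> d x z + d z y = d x y"
  by (simp add: interval_def)

lemma two_nbrs:
  assumes "p \<in> V" "a \<in> V" "b \<in> V" "E p a" "E p b" "a \<noteq> b"
  shows "d a b = 2"
proof -
  have "d a b \<le> d a p + d p b" using dist_tri assms by blast
  moreover have "d a p = 1" "d p b = 1" using edge_dist assms sym by auto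
  moreover have "d a b \<noteq> 0" using dist_eq0 assms by auto
  moreover have "\<not> E a b" using bip[of p a b] assms edge_dist by auto
  then have "d a b \<noteq> 1" using dist1_edge assms by auto
  ultimately show ?thesis by linarith
qed

lemma sq_dir:
  assumes V: "a \<in> V" "b \<in> V" "c \<in> V" "dd \<in> V" "w \<in> V"
    and e: "E a b" "E c dd" "E a c" "E b dd" and ne: "a \<noteq> dd" "b \<noteq> c"
    and lt: "d w a < d w b"
  shows "d w c < d w dd"
proof (rule ccontr)
  assume nlt: "\<not> d w c < d w dd"
  define k where "k = d w a"
  have s1: "d w b = d w a + 1 \<or> d w a = d w b + 1" using edge_step[of w a b] V e by auto
  have s2: "d w dd = d w c + 1 \<or> d w c = d w dd + 1" using edge_step[of w c dd] V e by auto
  have s3: "d w c = d w a + 1 \<or> d w a = d w c + 1" using edge_step[of w a c] V e by auto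
  have s4: "d w dd = d w b + 1 \<or> d w b = d w dd + 1" using edge_step[of w b dd] V e by auto
  have wb: "d w b = k + 1" and wc: "d w c = k + 1" and wd: "d w dd = k"
    using s1 s2 s3 s4 lt nlt unfolding k_def by linarith+
  have ad: "d a dd = 2" using two_nbrs[of b a dd] V e sym ne by auto
  obtain m where m: "m \<in> I w a" "m \<in> I a dd" "m \<in> I w dd" using med[of w a dd] V by blast
  have mV: "m \<in> V" using m by (simp add: in_I)
  have eqs: "d w m + d m a = k" "d a m + d m dd = 2" "d w m + d m dd = k"
    using m ad wd unfolding k_def by (auto simp: in_I)
  have "d m a = d a m" using dist_sym mV V by auto
  then have ma: "d m a = 1" and md: "d m dd = 1" and wm: "d w m + 1 = k" using eqs by linarith+
  have Ema: "E m a" "E m dd" using dist1_edge mV V ma md by auto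
  have mb: "m \<noteq> b" using wm wb by auto
  have mc: "m \<noteq> c" using wm wc by auto
  have bc: "d b c = 2" using two_nbrs[of a b c] V e ne by auto
  have cm: "d c m = 2" using two_nbrs[of a c m] V e ne mc Ema sym mV by auto
  have bm: "d b m = 2" using two_nbrs[of a b m] V e ne mb Ema sym mV by auto
  have d1: "d b a = 1" "d a c = 1" "d c a = 1" "d a m = 1" "d m a = 1"
    using edge_dist V e sym mV Ema by auto
  have d2: "d b dd = 1" "d dd c = 1" "d c dd = 1" "d dd m = 1" "d m dd = 1"
    using edge_dist V e sym mV Ema by auto
  have "a \<in> I b c \<inter> I c m \<inter> I b m" using d1 bc cm bm V by (auto simp: in_I)
  moreover have "dd \<in> I b c \<inter> I c m \<inter> I b m" using d2 bc cm bm V by (auto simp: in_I)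
  ultimately have "a = dd" using med[of b c m] V mV by blast
  then show False using ne by simp
qed

definition W :: "'v \<Rightarrow> 'v \<Rightarrow> 'v set" where
  "W u v = {w\<in>V. d w u < d w v}"

lemma sq_W:
  assumes V: "a \<in> V" "b \<in> V" "c \<in> V" "dd \<in> V"
    and e: "E a b" "E c dd" "E a c" "E b dd" and ne: "a \<noteq> dd" "b \<noteq> c"
  shows "W a b = W c dd"
proof -
  have "w \<in> W c dd" if "w \<in> W a b" for w using sq_dir[of a b c dd w] that assms by (auto simp: W_def)
  moreover have "w \<in> W a b" if "w \<in> W c dd" for w
    using sq_dir[of c dd a b w] that assms sym by (auto simp: W_def)
  ultimately show ?thesis by blast
qed

lemma W_sub: "W u v \<subseteq> V" by (auto simp: W_def)

lemma W_compl:
  assumes "u \<in> V" "v \<in> V" "E u v"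
  shows "V - W u v = W v u"
proof -
  have "\<And>w. w\<in>V \<Longrightarrow> d w u \<noteq> d w v" using bip assms by blast
  then show ?thesis by (auto simp: W_def) (metis nat_neq_iff)
qed

lemma in_W_self: "u \<in> V \<Longrightarrow> v \<in> V \<Longrightarrow> E u v \<Longrightarrow> u \<in> W u v"
  using edge_dist by (auto simp: W_def)

lemma split_eq_aux:
  assumes uv: "u \<in> V" "v \<in> V" "E u v"
  shows "\<And>x y. d x u = n \<Longrightarrow> x \<in> V \<Longrightarrow> y \<in> V \<Longrightarrow> E x y \<Longrightarrow> x \<in> W u v \<Longrightarrow> y \<notin> W u v
    \<Longrightarrow> W x y = W u v"
proof (induction n rule: less_induct)
  case (less n x y)
  show ?case
  proof (cases "x = u")
    case True
    have "d y u = 1" using edge_dist less.prems True sym by auto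
    moreover have "d y u \<noteq> d y v" using bip[of y u v] uv less.prems by auto
    ultimately have "d y v = 0" using less.prems(6) less.prems(3) by (auto simp: W_def)
    then have "y = v" using dist_eq0 less.prems uv by auto
    then show ?thesis using True by simp
  next
    case False
    define k where "k = d x u"
    have xv: "d x v = k + 1" using less.prems edge_step[of x u v] uv unfolding k_def W_def by auto
    have yv0: "d y v < d y u" using less.prems bip[of y u v] uv by (auto simp: W_def)
    have "d u y = d u x + 1 \<or> d u x = d u y + 1" using edge_step[of u x y] less.prems uv by auto
    moreover have "d v y = d v x + 1 \<or> d v x = d v y + 1" using edge_step[of v x y] less.prems uv by auto
    moreover have "d u y = d y u" "d u x = d x u" "d v y = d y v" "d v x = d x v"
      using dist_sym less.prems uv by auto
    ultimately have yu: "d y u = k + 1" and yv: "d y v = k" using yv0 xv unfolding k_def by linarith+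
    obtain x' where x': "x' \<in> V" "E x x'" "d x' u + 1 = k"
      using step_toward[of x u] False less.prems uv unfolding k_def by auto
    have "d x' v \<le> d x' u + d u v" using dist_tri x' uv by auto
    moreover have "d u v = 1" using edge_dist uv by auto
    moreover have "d x v \<le> d x x' + d x' v" using dist_tri x' uv less.prems by auto
    moreover have "d x x' = 1" using edge_dist x' less.prems by auto
    ultimately have x'v: "d x' v = k" using x' xv by linarith
    have x'y: "x' \<noteq> y" using x' yu by auto
    have dx'y: "d x' y = 2" using two_nbrs[of x x' y] x' less.prems x'y by auto
    obtain m where m: "m \<in> I x' y" "m \<in> I y v" "m \<in> I x' v" using med[of x' y v] x' less.prems uv by blast
    have mV: "m \<in> V" using m by (simp add: in_I)
    have eqs: "d x' m + d m y = 2" "d y m + d m v = k" "d x' m + d m v = k"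
      using m dx'y x'v yv by (auto simp: in_I)
    have "d m y = d y m" using dist_sym mV less.prems by auto
    then have my: "d y m = 1" and mx: "d x' m = 1" and mv: "d m v + 1 = k" using eqs by linarith+
    have Ex'm: "E x' m" using dist1_edge x' mV mx by auto
    have Eym: "E y m" using dist1_edge less.prems mV my by auto
    have "d u y \<le> d u m + 1" using edge_lip[of u m y] uv mV less.prems Eym sym by auto
    then have "d m u \<ge> k" using dist_sym uv mV less.prems yu by auto
    then have mW: "m \<notin> W u v" using mv by (auto simp: W_def)
    have x'W: "x' \<in> W u v" using x' x'v by (auto simp: W_def)
    have "d x' u < n" using x' less.prems unfolding k_def by auto
    then have IH: "W x' m = W u v" using less.IH[of "d x' u" x' m] x' mV Ex'm x'W mW by auto
    have xm: "x \<noteq> m" using xv mv by auto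
    have "W x y = W x' m" using sq_W[of x y x' m] less.prems x' mV Ex'm Eym xm x'y by auto
    then show ?thesis using IH by simp
  qed
qed

lemma split_eq:
  assumes "u \<in> V" "v \<in> V" "E u v" "x \<in> V" "y \<in> V" "E x y" "x \<in> W u v" "y \<notin> W u v"
  shows "W x y = W u v"
  using split_eq_aux[OF assms(1-3) refl assms(4-8)] .

lemma W_convex:
  assumes uv: "u \<in> V" "v \<in> V" "E u v" and xy: "x \<in> W u v" "y \<in> W u v"
  shows "z \<in> I x y \<Longrightarrow> z \<in> W u v"
proof -
  have xV: "x \<in> V" and yV: "y \<in> V" using xy W_sub by auto
  have "\<forall>z. d x z = n \<longrightarrow> z \<in> I x y \<longrightarrow> z \<in> W u v" for n
  proof (induction n)
    case 0
    show ?case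
    proof (intro allI impI)
      fix z assume "d x z = 0" "z \<in> I x y"
      then have "z = x" using dist_eq0[of x z] xV by (auto simp: in_I)
      then show "z \<in> W u v" using xy by simp
    qed
  next
    case (Suc n)
    show ?case
    proof (intro allI impI)
      fix z assume z: "d x z = Suc n" "z \<in> I x y"
      have zV: "z \<in> V" using z by (simp add: in_I)
      have "z \<noteq> x" using z xV by auto
      then obtain z' where z': "z' \<in> V" "E z z'" "d z' x + 1 = d z x" using step_toward zV xV by blast
      have "d z x = d x z" "d z' x = d x z'" using dist_sym xV zV z' by auto
      then have xz': "d x z' = n" using z' z by simp
      have "d z' y \<le> d z' z + d z y" using dist_tri z' zV yV by auto
      moreover have "d z' z = 1" using edge_dist z' zV sym by auto
      moreover have "d x z' + d z' y \<ge> d x y" using dist_tri xV yV z' by auto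
      moreover have "d x y = d x z + d z y" using z by (simp add: in_I)
      ultimately have z'y: "d z' y = d z y + 1" and "d x z' + d z' y = d x y" using z xz' by linarith+
      then have "z' \<in> I x y" using z' by (simp add: in_I)
      then have z'W: "z' \<in> W u v" using Suc.IH xz' by auto
      show "z \<in> W u v"
      proof (rule ccontr)
        assume "z \<notin> W u v"
        moreover have "E z' z" using sym z' zV by blast
        ultimately have "W z' z = W u v" using split_eq[of u v z' z] uv z' zV z'W by blast
        then have "d y z' < d y z" using xy(2) by (auto simp: W_def)
        moreover have "d y z' = d z' y" "d y z = d z y" using dist_sym yV z' zV by auto
        ultimately show False using z'y by simp
      qed
    qed
  qed
  then show "z \<in> I x y \<Longrightarrow> z \<in> W u v" by blast
qed

end

context mg
begin

definition Splits :: "'v set set" where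
  "Splits = {W u v | u v. u \<in> V \<and> v \<in> V \<and> E u v}"

definition Sep :: "'v \<Rightarrow> 'v \<Rightarrow> 'v set set" where
  "Sep a b = {S\<in>Splits. a \<notin> S \<and> b \<in> S}"

lemma Splits_sub: "S \<in> Splits \<Longrightarrow> S \<subseteq> V"
  using W_sub by (auto simp: Splits_def)

lemma Splits_compl: "S \<in> Splits \<Longrightarrow> V - S \<in> Splits"
proof -
  assume "S \<in> Splits"
  then obtain u v where uv: "u \<in> V" "v \<in> V" "E u v" "S = W u v" by (auto simp: Splits_def)
  have "E v u" using sym uv by blast
  then show ?thesis using W_compl[OF uv(1-3)] uv unfolding Splits_def by blast
qed

lemma W_in_Splits: "u \<in> V \<Longrightarrow> v \<in> V \<Longrightarrow> E u v \<Longrightarrow> W u v \<in> Splits"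
  by (auto simp: Splits_def)

lemma split_edge:
  assumes "S \<in> Splits" "x \<in> V" "y \<in> V" "E x y" "x \<in> S" "y \<notin> S"
  shows "S = W x y"
proof -
  obtain u v where uv: "u \<in> V" "v \<in> V" "E u v" "S = W u v" using assms by (auto simp: Splits_def)
  show ?thesis using split_eq[OF uv(1-3) assms(2-4)] assms uv by simp
qed

lemma Splits_convex: assumes "S \<in> Splits" "x \<in> S" "y \<in> S" shows "I x y \<subseteq> S"
proof -
  obtain u v where uv: "u \<in> V" "v \<in> V" "E u v" "S = W u v" using assms by (auto simp: Splits_def)
  show ?thesis using W_convex[OF uv(1-3)] assms uv by blast
qed

lemma dist_formula:
  "\<And>a. a \<in> V \<Longrightarrow> b \<in> V \<Longrightarrow> d a b = n \<Longrightarrow> finite (Sep a b) \<and> card (Sep a b) = n"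
proof (induction n)
  case 0
  then have "a = b" using dist_eq0 by blast
  then have "Sep a b = {}" by (auto simp: Sep_def)
  then show ?case by simp
next
  case (Suc n a)
  then have "a \<noteq> b" by auto
  then obtain a' where a': "a' \<in> V" "E a a'" "d a' b + 1 = d a b" using step_toward Suc.prems by blast
  have Ea'a: "E a' a" using sym a' Suc.prems by blast
  have IH: "finite (Sep a' b) \<and> card (Sep a' b) = n" using Suc a' by auto
  have daa': "d a a' = 1" "d a' a = 1" using edge_dist a' Ea'a Suc.prems by auto
  have "d b a' = d a' b" "d b a = d a b" using dist_sym a' Suc.prems by auto
  then have dba: "d b a' < d b a" using a' by simp
  have WS: "W a' a \<in> Sep a b"
    using W_in_Splits[OF a'(1) Suc.prems(1) Ea'a] daa' dba Suc.prems by (auto simp: Sep_def W_def)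
  have Wn: "W a' a \<notin> Sep a' b" using in_W_self[OF a'(1) Suc.prems(1) Ea'a] by (auto simp: Sep_def)
  have a'I: "a' \<in> I a b" using a' daa' Suc.prems by (auto simp: in_I)
  have sub1: "Sep a' b \<subseteq> Sep a b"
  proof
    fix S assume S: "S \<in> Sep a' b"
    have "a \<notin> S"
    proof
      assume "a \<in> S"
      then have "I a b \<subseteq> S" using Splits_convex S by (auto simp: Sep_def)
      then show False using a'I S by (auto simp: Sep_def)
    qed
    then show "S \<in> Sep a b" using S by (auto simp: Sep_def)
  qed
  have sub2: "Sep a b \<subseteq> insert (W a' a) (Sep a' b)"
  proof
    fix S assume S: "S \<in> Sep a b"
    show "S \<in> insert (W a' a) (Sep a' b)"
    proof (cases "a' \<in> S")
      case True
      then have "S = W a' a" using split_edge[of S a' a] S a' Suc.prems Ea'a by (auto simp: Sep_def)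
      then show ?thesis by simp
    next
      case False then show ?thesis using S by (auto simp: Sep_def)
    qed
  qed
  have "Sep a b = insert (W a' a) (Sep a' b)" using sub1 sub2 WS by blast
  then show ?case using IH Wn by simp
qed

lemma dist_card: "a \<in> V \<Longrightarrow> b \<in> V \<Longrightarrow> finite (Sep a b) \<and> card (Sep a b) = d a b"
  using dist_formula by blast

lemma Sep_ne: assumes "a \<in> V" "b \<in> V" "a \<noteq> b" shows "\<exists>S\<in>Splits. a \<notin> S \<and> b \<in> S"
proof -
  have "d a b \<noteq> 0" using dist_eq0 assms by blast
  then have "Sep a b \<noteq> {}" using dist_card[OF assms(1,2)] by auto
  then show ?thesis by (auto simp: Sep_def)
qed

lemma I_char:
  assumes V: "x \<in> V" "y \<in> V" "z \<in> V" and h: "\<And>S. S \<in> Splits \<Longrightarrow> x \<in> S \<Longrightarrow> y \<in> S \<Longrightarrow> z \<in> S"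
  shows "z \<in> I x y"
proof -
  have s1: "Sep x z \<subseteq> Sep x y"
  proof
    fix S assume S: "S \<in> Sep x z"
    have "y \<in> S"
    proof (rule ccontr)
      assume "y \<notin> S"
      then have "z \<in> V - S" using h[of "V - S"] Splits_compl S V by (auto simp: Sep_def)
      then show False using S by (auto simp: Sep_def)
    qed
    then show "S \<in> Sep x y" using S by (auto simp: Sep_def)
  qed
  have s2: "Sep z y \<subseteq> Sep x y"
  proof
    fix S assume S: "S \<in> Sep z y"
    have "x \<notin> S" using h[of S] S by (auto simp: Sep_def)
    then show "S \<in> Sep x y" using S by (auto simp: Sep_def)
  qed
  have dj: "Sep x z \<inter> Sep z y = {}" by (auto simp: Sep_def)
  have f: "finite (Sep x y)" using dist_card V by blast
  have "card (Sep x z) + card (Sep z y) = card (Sep x z \<union> Sep z y)"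
    using dj f s1 s2 by (metis card_Un_disjoint finite_subset)
  also have "\<dots> \<le> card (Sep x y)" using f s1 s2 by (intro card_mono) auto
  finally have "d x z + d z y \<le> d x y" using dist_card V by simp
  moreover have "d x y \<le> d x z + d z y" using dist_tri V by blast
  ultimately show ?thesis using V by (simp add: in_I)
qed

definition conv :: "'v set \<Rightarrow> bool" where
  "conv C \<longleftrightarrow> C \<subseteq> V \<and> (\<forall>x\<in>C. \<forall>y\<in>C. I x y \<subseteq> C)"

lemma conv_Splits: "S \<in> Splits \<Longrightarrow> conv S"
  using Splits_sub Splits_convex by (auto simp: conv_def)

lemma conv_V: "conv V" by (auto simp: conv_def interval_def)

lemma conv_Int: "conv A \<Longrightarrow> conv B \<Longrightarrow> conv (A \<inter> B)"
  by (auto simp: conv_def)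

lemma helly3:
  assumes "conv A" "conv B" "conv C" "a \<in> A \<inter> B" "b \<in> B \<inter> C" "c \<in> A \<inter> C"
  shows "A \<inter> B \<inter> C \<noteq> {}"
proof -
  have V: "a \<in> V" "b \<in> V" "c \<in> V" using assms by (auto simp: conv_def)
  obtain m where m: "m \<in> I a b" "m \<in> I b c" "m \<in> I a c" using med[OF V] by blast
  have "m \<in> B" using m(1) assms unfolding conv_def by blast
  moreover have "m \<in> C" using m(2) assms unfolding conv_def by blast
  moreover have "m \<in> A" using m(3) assms unfolding conv_def by blast
  ultimately show ?thesis by blast
qed

lemma helly_aux:
  "\<And>F. card F = n \<Longrightarrow> finite F \<Longrightarrow> F \<noteq> {} \<Longrightarrow> (\<forall>C\<in>F. conv C) \<Longrightarrow>
     (\<forall>A\<in>F. \<forall>B\<in>F. A \<inter> B \<noteq> {}) \<Longrightarrow> \<Inter>F \<noteq> {}"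
proof (induction n rule: less_induct)
  case (less n F)
  obtain A where A: "A \<in> F" using less.prems by blast
  define F0 where "F0 = F - {A}"
  have FF: "F = insert A F0" "A \<notin> F0" using A F0_def by auto
  show ?case
  proof (cases "F0 = {}")
    case True
    then show ?thesis using FF less.prems A by auto
  next
    case False
    define F' where "F' = (\<lambda>B. A \<inter> B) ` F0"
    have fin: "finite F'" using less.prems FF by (simp add: F'_def)
    have cd: "card F' < n" using less.prems FF card_image_le[of F0 "\<lambda>B. A \<inter> B"]
      by (simp add: F'_def)
    have ne: "F' \<noteq> {}" using False by (simp add: F'_def)
    have cF: "\<forall>C\<in>F. conv C" using less.prems by blast
    have cv: "\<forall>C\<in>F'. conv C" unfolding F'_def using cF FF conv_Int by blast
    have pw: "\<forall>X\<in>F'. \<forall>Y\<in>F'. X \<inter> Y \<noteq> {}"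
    proof (intro ballI)
      fix X Y assume "X \<in> F'" "Y \<in> F'"
      then obtain B B' where B: "B \<in> F0" "B' \<in> F0" "X = A \<inter> B" "Y = A \<inter> B'" by (auto simp: F'_def)
      have "B \<in> F" "B' \<in> F" using B FF by auto
      have pF: "\<forall>A\<in>F. \<forall>B\<in>F. A \<inter> B \<noteq> {}" using less.prems by blast
      then have "A \<inter> B \<noteq> {}" "B \<inter> B' \<noteq> {}" "A \<inter> B' \<noteq> {}" using A \<open>B\<in>F\<close> \<open>B'\<in>F\<close> by blast+
      then obtain a b c where abc: "a \<in> A \<inter> B" "b \<in> B \<inter> B'" "c \<in> A \<inter> B'" by blast
      have "conv A" "conv B" "conv B'" using cF A \<open>B\<in>F\<close> \<open>B'\<in>F\<close> by blast+
      then have "A \<inter> B \<inter> B' \<noteq> {}" using helly3[OF _ _ _ abc] by blast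
      then show "X \<inter> Y \<noteq> {}" using B by auto
    qed
    have "\<Inter>F' \<noteq> {}" using less.IH[OF cd refl fin ne cv pw] .
    moreover have "\<Inter>F' = \<Inter>F" using FF False by (auto simp: F'_def)
    ultimately show ?thesis by simp
  qed
qed

lemma helly:
  "finite F \<Longrightarrow> F \<noteq> {} \<Longrightarrow> (\<forall>C\<in>F. conv C) \<Longrightarrow> (\<forall>A\<in>F. \<forall>B\<in>F. A \<inter> B \<noteq> {}) \<Longrightarrow> \<Inter>F \<noteq> {}"
  using helly_aux by blast

end

context mg
begin

definition aut :: "('v \<Rightarrow> 'v) \<Rightarrow> bool" where
  "aut f \<longleftrightarrow> bij_betw f V V \<and> (\<forall>x\<in>V. \<forall>y\<in>V. E x y \<longleftrightarrow> E (f x) (f y))"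

lemma aut_V: "aut f \<Longrightarrow> x \<in> V \<Longrightarrow> f x \<in> V"
  by (auto simp: aut_def bij_betw_def)

lemma aut_inv: assumes "aut f" shows "aut (inv_into V f)"
proof -
  have b: "bij_betw f V V" using assms by (simp add: aut_def)
  have bi: "bij_betw (inv_into V f) V V" using bij_betw_inv_into[OF b] .
  have "E a b \<longleftrightarrow> E (inv_into V f a) (inv_into V f b)" if "a \<in> V" "b \<in> V" for a b
  proof -
    have "inv_into V f a \<in> V" "inv_into V f b \<in> V" using bi that by (auto simp: bij_betw_def)
    moreover have "f (inv_into V f a) = a" "f (inv_into V f b) = b"
      using b that by (auto simp: bij_betw_def f_inv_into_f)
    ultimately show ?thesis using assms unfolding aut_def by metis
  qed
  then show ?thesis using bi by (simp add: aut_def)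
qed

lemma aut_dist_le: assumes "aut f" "x \<in> V" "y \<in> V" shows "d (f x) (f y) \<le> d x y"
proof -
  obtain xs where xs: "is_path V E xs" "hd xs = x" "last xs = y" "length xs = Suc (d x y)"
    using dist_ex assms by blast
  have "is_path V E (map f xs)"
    by (rule is_path_map[of V E xs f V E]) (use xs(1) aut_V[OF assms(1)] assms(1) in \<open>auto simp: aut_def\<close>)
  from dist_le[OF this] xs show ?thesis by (cases xs) (auto simp: last_map)
qed

lemma aut_dist: assumes "aut f" "x \<in> V" "y \<in> V" shows "d (f x) (f y) = d x y"
proof -
  let ?g = "inv_into V f"
  have g: "aut ?g" using aut_inv assms by blast
  have "?g (f x) = x" "?g (f y) = y" using assms by (auto simp: aut_def bij_betw_def)
  moreover have "d (?g (f x)) (?g (f y)) \<le> d (f x) (f y)"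
    using aut_dist_le[OF g] aut_V[OF assms(1)] assms by blast
  ultimately show ?thesis using aut_dist_le[OF assms] by simp
qed

lemma aut_surj: "aut f \<Longrightarrow> z \<in> V \<Longrightarrow> \<exists>z'\<in>V. z = f z'"
  by (auto simp: aut_def bij_betw_def)

lemma aut_inj: "aut f \<Longrightarrow> x \<in> V \<Longrightarrow> y \<in> V \<Longrightarrow> f x = f y \<Longrightarrow> x = y"
  by (auto simp: aut_def bij_betw_def inj_on_def)

lemma aut_E: "aut f \<Longrightarrow> x \<in> V \<Longrightarrow> y \<in> V \<Longrightarrow> E (f x) (f y) \<longleftrightarrow> E x y"
  by (auto simp: aut_def)

lemma aut_I: assumes "aut f" "x \<in> V" "y \<in> V" shows "f ` I x y = I (f x) (f y)"
proof
  show "f ` I x y \<subseteq> I (f x) (f y)"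
  proof
    fix z assume "z \<in> f ` I x y"
    then obtain z' where z': "z' \<in> I x y" "z = f z'" by blast
    then have "z' \<in> V" by (simp add: in_I)
    then show "z \<in> I (f x) (f y)" using z' aut_dist[OF assms(1)] assms aut_V[OF assms(1)] by (auto simp: in_I)
  qed
next
  show "I (f x) (f y) \<subseteq> f ` I x y"
  proof
    fix z assume z: "z \<in> I (f x) (f y)"
    then obtain z' where z': "z' \<in> V" "z = f z'" using aut_surj[OF assms(1)] by (auto simp: in_I)
    then have "z' \<in> I x y" using z aut_dist[OF assms(1)] assms by (auto simp: in_I)
    then show "z \<in> f ` I x y" using z' by blast
  qed
qed

lemma aut_W: assumes "aut f" "u \<in> V" "v \<in> V" shows "f ` W u v = W (f u) (f v)"
proof
  show "f ` W u v \<subseteq> W (f u) (f v)"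
  proof
    fix z assume "z \<in> f ` W u v"
    then obtain z' where z': "z' \<in> W u v" "z = f z'" by blast
    then have "z' \<in> V" by (simp add: W_def)
    then show "z \<in> W (f u) (f v)" using z' aut_dist[OF assms(1)] assms aut_V[OF assms(1)] by (auto simp: W_def)
  qed
next
  show "W (f u) (f v) \<subseteq> f ` W u v"
  proof
    fix z assume z: "z \<in> W (f u) (f v)"
    then obtain z' where z': "z' \<in> V" "z = f z'" using aut_surj[OF assms(1)] by (auto simp: W_def)
    then have "z' \<in> W u v" using z aut_dist[OF assms(1)] assms by (auto simp: W_def)
    then show "z \<in> f ` W u v" using z' by blast
  qed
qed

lemma I_sym: "x \<in> V \<Longrightarrow> y \<in> V \<Longrightarrow> I x y = I y x"
  using dist_sym by (auto simp: in_I)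

lemma I_sub: assumes "x \<in> V" "y \<in> V" "x' \<in> I x y" shows "I x' y \<subseteq> I x y"
proof
  fix z assume z: "z \<in> I x' y"
  have V: "x' \<in> V" "z \<in> V" using assms z by (auto simp: in_I)
  have "d x z \<le> d x x' + d x' z" using dist_tri assms V by blast
  moreover have "d x x' + d x' y = d x y" "d x' z + d z y = d x' y" using assms z by (auto simp: in_I)
  moreover have "d x y \<le> d x z + d z y" using dist_tri assms V by blast
  ultimately show "z \<in> I x y" using V by (simp add: in_I)
qed

lemma edge_cross:
  assumes S: "S \<in> Splits" and y: "y \<in> V" "y \<in> S"
  shows "\<And>x. x \<in> V \<Longrightarrow> x \<notin> S \<Longrightarrow> d x y = n \<Longrightarrow> \<exists>p\<in>I x y. \<exists>q\<in>I x y. E p q \<and> p \<notin> S \<and> q \<in> S"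
proof (induction n)
  case 0 then show ?case using dist_eq0 y by blast
next
  case (Suc n x)
  have "x \<noteq> y" using Suc.prems y by auto
  then obtain x' where x': "x' \<in> V" "E x x'" "d x' y + 1 = d x y" using step_toward Suc.prems y by blast
  have "d x x' = 1" using edge_dist x' Suc.prems by blast
  then have x'I: "x' \<in> I x y" using x' by (simp add: in_I)
  have xI: "x \<in> I x y" using Suc.prems y by (simp add: in_I)
  show ?case
  proof (cases "x' \<in> S")
    case True then show ?thesis using x'I xI x' Suc.prems by blast
  next
    case False
    then obtain p q where "p \<in> I x' y" "q \<in> I x' y" "E p q" "p \<notin> S" "q \<in> S" using Suc.IH[of x'] x' Suc.prems by auto
    then show ?thesis using I_sub[OF Suc.prems(1) y(1) x'I] by blast
  qed
qed

lemma odd_fix: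
  assumes fin: "finite V" and f: "aut f" and Ob: "Ob \<subseteq> V" "f ` Ob = Ob" "odd (card Ob)" "finite Ob"
  shows "\<exists>m\<in>V. f m = m"
proof -
  define Fm where "Fm = insert V {S\<in>Splits. card Ob < 2 * card (S \<inter> Ob)}"
  have finS: "finite Splits" using fin Splits_sub by (metis Pow_iff finite_Pow_iff rev_finite_subset subsetI)
  have "finite Fm" using finS by (simp add: Fm_def)
  moreover have "Fm \<noteq> {}" by (simp add: Fm_def)
  moreover have "\<forall>C\<in>Fm. conv C" unfolding Fm_def using conv_V conv_Splits by blast
  moreover have "\<forall>A\<in>Fm. \<forall>B\<in>Fm. A \<inter> B \<noteq> {}"
  proof (intro ballI)
    fix A B assume A: "A \<in> Fm" and B: "B \<in> Fm"
    have ne: "S \<noteq> {}" if "S \<in> Splits" for S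
      using that in_W_self by (auto simp: Splits_def)
    have maj: "A \<inter> B \<noteq> {}" if "A \<in> Splits" "B \<in> Splits" "card Ob < 2 * card (A \<inter> Ob)" "card Ob < 2 * card (B \<inter> Ob)"
    proof
      assume "A \<inter> B = {}"
      then have "card (A \<inter> Ob) + card (B \<inter> Ob) = card ((A \<inter> Ob) \<union> (B \<inter> Ob))"
        using Ob(4) by (intro card_Un_disjoint[symmetric]) auto
      also have "\<dots> \<le> card Ob" using Ob(4) by (intro card_mono) auto
      finally show False using that by linarith
    qed
    show "A \<inter> B \<noteq> {}"
    proof (cases "A = V")
      case True
      show ?thesis
      proof (cases "B = V")
        case True
        have "Ob \<noteq> {}" using Ob(3) by (metis card.empty even_zero)
        then have "V \<noteq> {}" using Ob(1) by blast
        then show ?thesis using \<open>A = V\<close> True by simp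
      next
        case False
        then have "B \<in> Splits" using B by (simp add: Fm_def)
        then show ?thesis using \<open>A = V\<close> ne Splits_sub by (metis Int_absorb1)
      qed
    next
      case False
      then have A': "A \<in> Splits" "card Ob < 2 * card (A \<inter> Ob)" using A by (auto simp: Fm_def)
      show ?thesis
      proof (cases "B = V")
        case True then show ?thesis using A' ne Splits_sub by (metis Int_absorb2)
      next
        case False
        then have "B \<in> Splits" "card Ob < 2 * card (B \<inter> Ob)" using B by (auto simp: Fm_def)
        then show ?thesis using maj A' by blast
      qed
    qed
  qed
  ultimately have "\<Inter>Fm \<noteq> {}" using helly by blast
  then obtain m where m: "m \<in> \<Inter>Fm" by blast
  have mV: "m \<in> V" using m by (auto simp: Fm_def)
  have fm: "f m \<in> \<Inter>Fm"
  proof -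
    have "f m \<in> S" if S: "S \<in> Splits" "card Ob < 2 * card (S \<inter> Ob)" for S
    proof -
      obtain u v where uv: "u \<in> V" "v \<in> V" "E u v" "S = W u v" using S by (auto simp: Splits_def)
      obtain u' where u': "u' \<in> V" "u = f u'" using aut_surj[OF f uv(1)] by blast
      obtain v' where v': "v' \<in> V" "v = f v'" using aut_surj[OF f uv(2)] by blast
      have u'v': "u' \<in> V" "v' \<in> V" "u = f u'" "v = f v'" using u' v' by auto
      have E': "E u' v'" using aut_E[OF f u'v'(1,2)] uv(3) unfolding u'v'(3,4) by blast
      have S': "W u' v' \<in> Splits" using W_in_Splits u'v' E' by blast
      have img: "f ` W u' v' = S" using aut_W[OF f u'v'(1,2)] uv(4) unfolding u'v'(3,4) by blast
      have injf: "inj_on f V" using f by (simp add: aut_def bij_betw_def)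
      have "f ` (W u' v' \<inter> Ob) = f ` W u' v' \<inter> f ` Ob" by (rule inj_on_image_Int[OF injf W_sub Ob(1)])
      then have "f ` (W u' v' \<inter> Ob) = S \<inter> Ob" unfolding img Ob(2) .
      have "card (W u' v' \<inter> Ob) = card (S \<inter> Ob)"
      proof -
        have "W u' v' \<inter> Ob \<subseteq> V" using W_sub by blast
        from inj_on_subset[OF injf this] have "inj_on f (W u' v' \<inter> Ob)" .
        then have "card (f ` (W u' v' \<inter> Ob)) = card (W u' v' \<inter> Ob)" by (rule card_image)
        then show ?thesis using \<open>f ` (W u' v' \<inter> Ob) = S \<inter> Ob\<close> by simp
      qed
      then have "W u' v' \<in> Fm" using S' S by (simp add: Fm_def)
      then have "m \<in> W u' v'" using m by blast
      then show "f m \<in> S" using img by blast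
    qed
    moreover have "f m \<in> V" using aut_V[OF f mV] .
    ultimately show ?thesis unfolding Fm_def by blast
  qed
  show ?thesis
  proof (rule ccontr)
    assume nf: "\<not> ?thesis"
    then have "m \<noteq> f m" using mV by auto
    then obtain S where S: "S \<in> Splits" "m \<notin> S" "f m \<in> S" using Sep_ne mV aut_V[OF f mV] by blast
    have SV: "S \<subseteq> V" using Splits_sub S by blast
    have "card (S \<inter> Ob) + card ((V - S) \<inter> Ob) = card Ob"
    proof -
      have "card (S \<inter> Ob) + card ((V - S) \<inter> Ob) = card ((S \<inter> Ob) \<union> ((V - S) \<inter> Ob))"
        using Ob(4) by (intro card_Un_disjoint[symmetric]) auto
      moreover have "(S \<inter> Ob) \<union> ((V - S) \<inter> Ob) = Ob" using Ob(1) SV by blast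
      ultimately show ?thesis by simp
    qed
    then have "card Ob < 2 * card (S \<inter> Ob) \<or> card Ob < 2 * card ((V - S) \<inter> Ob)" using Ob(3) by presburger
    then show False
    proof
      assume "card Ob < 2 * card (S \<inter> Ob)"
      then have "S \<in> Fm" using S by (simp add: Fm_def)
      then show False using m S by blast
    next
      assume "card Ob < 2 * card ((V - S) \<inter> Ob)"
      then have "V - S \<in> Fm" using Splits_compl S by (simp add: Fm_def)
      then show False using fm S by blast
    qed
  qed
qed


lemma inv_cube:
  assumes fin: "finite V" and ne: "V \<noteq> {}" and f: "aut f" and inv: "\<forall>x\<in>V. f (f x) = x"
  shows "\<exists>S. is_cube V E S \<and> f ` S = S"
proof -
  obtain x0 where "x0 \<in> V" using ne by blast
  then obtain x where xV: "x \<in> V" and mn: "\<forall>z. z \<in> V \<longrightarrow> d x (f x) \<le> d z (f z)"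
    using ex_has_least_nat[of "\<lambda>z. z \<in> V" x0 "\<lambda>z. d z (f z)"] by blast
  define y where "y = f x"
  have yV: "y \<in> V" using aut_V[OF f xV] by (simp add: y_def)
  have fy: "f y = x" using inv xV by (simp add: y_def)
  define J where "J = I x y"
  define Sx where "Sx = Sep x y"
  have finSx: "finite Sx" and cardSx: "card Sx = d x y" using dist_card[OF xV yV] by (auto simp: Sx_def)
  have JV: "J \<subseteq> V" by (auto simp: J_def in_I)
  have fJ: "f ` J = J"
  proof -
    have "f ` J = I (f x) (f y)" unfolding J_def by (rule aut_I[OF f xV yV])
    also have "\<dots> = I y x" using fy by (simp add: y_def)
    also have "\<dots> = J" unfolding J_def using I_sym xV yV by blast
    finally show ?thesis .
  qed
  have fJ': "z \<in> J \<Longrightarrow> f z \<in> J" for z using fJ by blast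
  have SxS: "Sx \<subseteq> Splits" by (auto simp: Sx_def Sep_def)
  have Sxmem: "S \<in> Sx \<longleftrightarrow> S \<in> Splits \<and> x \<notin> S \<and> y \<in> S" for S by (simp add: Sx_def Sep_def)
  have sep_in: "S \<in> Sx \<or> V - S \<in> Sx" if a: "a \<in> J" and b: "b \<in> J" and S: "S \<in> Splits" "a \<notin> S" "b \<in> S" for a b S
  proof -
    have SV: "S \<subseteq> V" using Splits_sub S by blast
    have c1: "\<not> (x \<in> S \<and> y \<in> S)"
    proof
      assume "x \<in> S \<and> y \<in> S"
      then have "J \<subseteq> S" using Splits_convex[OF S(1)] by (simp add: J_def)
      then show False using a S by blast
    qed
    have c2: "\<not> (x \<notin> S \<and> y \<notin> S)"
    proof
      assume h: "x \<notin> S \<and> y \<notin> S"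
      have "V - S \<in> Splits" using Splits_compl S by blast
      moreover have "x \<in> V - S" "y \<in> V - S" using h xV yV by auto
      ultimately have "J \<subseteq> V - S" using Splits_convex by (simp add: J_def)
      then show False using b S by blast
    qed
    show ?thesis
    proof (cases "y \<in> S")
      case True then have "S \<in> Sx" using c1 S Sxmem by blast
      then show ?thesis by blast
    next
      case False then have "x \<in> S" using c2 by blast
      then have "V - S \<in> Sx" using Sxmem Splits_compl[OF S(1)] yV False by blast
      then show ?thesis by blast
    qed
  qed
  define T where "T a b = {S\<in>Sx. (a \<in> S) \<noteq> (b \<in> S)}" for a b
  have Tcard: "card (T a b) = d a b" if a: "a \<in> J" and b: "b \<in> J" for a b
  proof -
    have aV: "a \<in> V" and bV: "b \<in> V" using a b JV by auto
    define g where "g S = (if S \<in> Sx then S else V - S)" for S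
    have SepS: "S \<in> Sep a b \<longleftrightarrow> S \<in> Splits \<and> a \<notin> S \<and> b \<in> S" for S by (simp add: Sep_def)
    have inj: "inj_on g (Sep a b)"
    proof (rule inj_onI)
      fix S S' assume S: "S \<in> Sep a b" and S': "S' \<in> Sep a b" and eq: "g S = g S'"
      have Sp: "S \<in> Splits" "a \<notin> S" "b \<in> S" using S unfolding SepS by auto
      have Sp': "S' \<in> Splits" "a \<notin> S'" "b \<in> S'" using S' unfolding SepS by auto
      have SV: "S \<subseteq> V" "S' \<subseteq> V" using Sp(1) Sp'(1) Splits_sub by auto
      show "S = S'"
      proof (cases "S \<in> Sx")
        case True
        show ?thesis
        proof (cases "S' \<in> Sx")
          case True then show ?thesis using eq \<open>S \<in> Sx\<close> by (simp add: g_def)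
        next
          case False
          then have "S = V - S'" using eq \<open>S \<in> Sx\<close> by (simp add: g_def)
          then have False using Sp(3) Sp'(3) by blast
          then show ?thesis ..
        qed
      next
        case False
        show ?thesis
        proof (cases "S' \<in> Sx")
          case True
          then have "V - S = S'" using eq \<open>S \<notin> Sx\<close> by (simp add: g_def)
          then have False using Sp(3) Sp'(3) by blast
          then show ?thesis ..
        next
          case False
          then have "V - S = V - S'" using eq \<open>S \<notin> Sx\<close> by (simp add: g_def)
          then show ?thesis using SV by blast
        qed
      qed
    qed
    have img: "g ` Sep a b = T a b"
    proof
      show "g ` Sep a b \<subseteq> T a b"
      proof
        fix R assume "R \<in> g ` Sep a b"
        then obtain S where S: "S \<in> Sep a b" and RS: "R = g S" by blast
        have S2: "S \<in> Splits" "a \<notin> S" "b \<in> S" using S unfolding SepS by auto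
        show "R \<in> T a b"
        proof (cases "S \<in> Sx")
          case True
          then have "R = S" using RS by (simp add: g_def)
          then show ?thesis using True S2 by (simp add: T_def)
        next
          case False
          then have "V - S \<in> Sx" using sep_in[OF a b S2] by blast
          moreover have "R = V - S" using RS False by (simp add: g_def)
          ultimately show ?thesis using S2 aV bV by (simp add: T_def)
        qed
      qed
    next
      show "T a b \<subseteq> g ` Sep a b"
      proof
        fix R assume R: "R \<in> T a b"
        then have RS: "R \<in> Sx" "(a \<in> R) \<noteq> (b \<in> R)" by (auto simp: T_def)
        have RSp: "R \<in> Splits" using RS SxS by blast
        have RV: "R \<subseteq> V" using RSp Splits_sub by blast
        show "R \<in> g ` Sep a b"
        proof (cases "b \<in> R")
          case True
          then have "a \<notin> R" using RS by blast
          then have "R \<in> Sep a b" using RSp True unfolding SepS by blast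
          moreover have "g R = R" using RS by (simp add: g_def)
          ultimately show ?thesis by (metis image_eqI)
        next
          case False
          then have "a \<in> R" using RS by blast
          have "V - R \<in> Splits" using Splits_compl RSp by blast
          then have "V - R \<in> Sep a b" using False \<open>a \<in> R\<close> bV unfolding SepS by blast
          moreover have "y \<in> R" using RS(1) unfolding Sxmem by blast
          then have "V - R \<notin> Sx" unfolding Sxmem by blast
          then have "g (V - R) = R" using RV by (auto simp: g_def)
          ultimately show ?thesis by (metis image_eqI)
        qed
      qed
    qed
    have "card (T a b) = card (Sep a b)" using card_image[OF inj] img by simp
    then show ?thesis using dist_card[OF aV bV] by simp
  qed
  have claimA: "(z \<in> S) = (f z \<notin> S)" if S: "S \<in> Sx" and z: "z \<in> J" for S z
  proof (rule ccontr)
    assume h: "(z \<in> S) \<noteq> (f z \<notin> S)"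
    have fz: "f z \<in> J" using fJ' z .
    have "T z (f z) \<subseteq> Sx - {S}" using h by (auto simp: T_def)
    then have "card (T z (f z)) \<le> card (Sx - {S})" using finSx by (intro card_mono) auto
    also have "\<dots> < card Sx" using card_Diff1_less[OF finSx S] .
    finally have "d z (f z) < d x (f x)" using Tcard[OF z fz] cardSx by (simp add: y_def)
    then show False using mn z JV by force
  qed
  have cross: "\<exists>z. z \<in> S \<and> z \<in> V - S'" if S: "S \<in> Sx" "S' \<in> Sx" "S \<noteq> S'" for S S'
  proof (rule ccontr)
    assume "\<not> ?thesis"
    moreover have "S \<subseteq> V" using S SxS Splits_sub by blast
    ultimately have sub: "S \<subseteq> S'" by blast
    have sub2: "J \<inter> S' \<subseteq> S"
    proof
      fix z assume z: "z \<in> J \<inter> S'"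
      then have "f z \<notin> S'" using claimA[OF S(2)] by blast
      then have "f z \<notin> S" using sub by blast
      then show "z \<in> S" using claimA[OF S(1)] z by blast
    qed
    have "x \<notin> S" "y \<in> S" "S \<in> Splits" using S Sxmem by auto
    then obtain p q where pq: "p \<in> J" "q \<in> J" "E p q" "p \<notin> S" "q \<in> S"
      using edge_cross[of S y x "d x y"] xV yV unfolding J_def by blast
    have pqV: "p \<in> V" "q \<in> V" using pq JV by auto
    have Eqp: "E q p" using sym pq pqV by blast
    have "q \<in> S'" "p \<notin> S'" using pq sub sub2 by auto
    then have "S' = W q p" using split_edge[of S' q p] S(2) SxS pqV Eqp by blast
    moreover have "S = W q p" using split_edge[of S q p] S(1) SxS pqV Eqp pq by blast
    ultimately show False using S by simp
  qed
  have finSp: "finite Splits" using fin Splits_sub by (metis Pow_iff finite_Pow_iff rev_finite_subset subsetI)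
  have surj: "\<exists>z\<in>J. \<forall>S\<in>Sx. z \<in> S \<longleftrightarrow> S \<in> A" if A: "A \<subseteq> Sx" for A
  proof -
    define Fam where "Fam = insert V (A \<union> (\<lambda>S. V - S) ` (Sx - A) \<union> {S\<in>Splits. x \<in> S \<and> y \<in> S})"
    have memb: "(x \<in> X \<and> y \<in> X) \<or> X \<in> A \<or> (\<exists>S\<in>Sx - A. X = V - S)" if "X \<in> Fam" for X
    proof -
      have "X = V \<or> X \<in> A \<or> X \<in> (\<lambda>S. V - S) ` (Sx - A) \<or> X \<in> {S\<in>Splits. x \<in> S \<and> y \<in> S}"
        using that unfolding Fam_def by blast
      then show ?thesis using xV yV by blast
    qed
    have Ay: "y \<in> X" "x \<notin> X" if "X \<in> A" for X
    proof -
      have "X \<in> Sx" using that A by blast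
      then show "y \<in> X" "x \<notin> X" unfolding Sxmem by blast+
    qed
    have Nx: "x \<in> V - S" "y \<notin> V - S" if "S \<in> Sx" for S
    proof -
      show "x \<in> V - S" "y \<notin> V - S" using that xV unfolding Sxmem by blast+
    qed
    have f1: "finite A" using finSx A finite_subset by blast
    have f2: "finite ((\<lambda>S. V - S) ` (Sx - A))" using finSx by simp
    have f3: "finite {S\<in>Splits. x \<in> S \<and> y \<in> S}" using finSp by simp
    have "finite Fam" unfolding Fam_def using f1 f2 f3 by simp
    moreover have "Fam \<noteq> {}" by (simp add: Fam_def)
    moreover have "\<forall>C\<in>Fam. conv C"
    proof
      fix C assume "C \<in> Fam"
      then have "C = V \<or> C \<in> Splits" using A SxS Splits_compl unfolding Fam_def by blast
      then show "conv C" using conv_V conv_Splits by blast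
    qed
    moreover have "\<forall>X1\<in>Fam. \<forall>X2\<in>Fam. X1 \<inter> X2 \<noteq> {}"
    proof (intro ballI)
      fix X1 X2 assume X1: "X1 \<in> Fam" and X2: "X2 \<in> Fam"
      have xy1: "x \<in> X1 \<or> y \<in> X1" using memb[OF X1] Ay Nx by blast
      have xy2: "x \<in> X2 \<or> y \<in> X2" using memb[OF X2] Ay Nx by blast
      have cr: "X1 \<inter> X2 \<noteq> {}" if h1: "X1 \<in> A" and h2: "\<exists>S\<in>Sx - A. X2 = V - S" for X1 X2
      proof -
        obtain S where S: "S \<in> Sx - A" "X2 = V - S" using h2 by blast
        have "X1 \<in> Sx" "X1 \<noteq> S" using h1 A S by auto
        then obtain z where "z \<in> X1" "z \<in> V - S" using cross[of X1 S] S by blast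
        then show ?thesis using S by blast
      qed
      show "X1 \<inter> X2 \<noteq> {}"
      proof (cases "x \<in> X1 \<and> y \<in> X1")
        case True then show ?thesis using xy2 by blast
      next
        case F1: False
        show ?thesis
        proof (cases "x \<in> X2 \<and> y \<in> X2")
          case True then show ?thesis using xy1 by blast
        next
          case F2: False
          have m1: "X1 \<in> A \<or> (\<exists>S\<in>Sx - A. X1 = V - S)" using memb[OF X1] F1 by blast
          have m2: "X2 \<in> A \<or> (\<exists>S\<in>Sx - A. X2 = V - S)" using memb[OF X2] F2 by blast
          show ?thesis
          proof (cases "X1 \<in> A")
            case True
            show ?thesis
            proof (cases "X2 \<in> A")
              case True then show ?thesis using Ay \<open>X1 \<in> A\<close> by blast
            next
              case False then show ?thesis using cr[of X1 X2] m2 \<open>X1 \<in> A\<close> by blast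
            qed
          next
            case False
            then obtain S1 where S1: "S1 \<in> Sx - A" "X1 = V - S1" using m1 by blast
            show ?thesis
            proof (cases "X2 \<in> A")
              case True then show ?thesis using cr[of X2 X1] S1 by blast
            next
              case False
              then obtain S2 where S2: "S2 \<in> Sx - A" "X2 = V - S2" using m2 by blast
              have "x \<in> X1" "x \<in> X2" using Nx S1 S2 by auto
              then show ?thesis by blast
            qed
          qed
        qed
      qed
    qed
    ultimately have "\<Inter>Fam \<noteq> {}" using helly by blast
    then obtain z where z: "z \<in> \<Inter>Fam" by blast
    have "V \<in> Fam" unfolding Fam_def by blast
    then have zV: "z \<in> V" using z by blast
    have "z \<in> J" unfolding J_def
    proof (rule I_char[OF xV yV zV])
      fix S assume "S \<in> Splits" "x \<in> S" "y \<in> S"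
      then have "S \<in> Fam" by (simp add: Fam_def)
      then show "z \<in> S" using z by blast
    qed
    moreover have "z \<in> S \<longleftrightarrow> S \<in> A" if S: "S \<in> Sx" for S
    proof
      assume "z \<in> S"
      show "S \<in> A"
      proof (rule ccontr)
        assume "S \<notin> A"
        then have "V - S \<in> Fam" using S by (simp add: Fam_def)
        then show False using z \<open>z \<in> S\<close> by blast
      qed
    next
      assume "S \<in> A"
      then have "S \<in> Fam" by (simp add: Fam_def)
      then show "z \<in> S" using z by blast
    qed
    ultimately show ?thesis by blast
  qed
  define n where "n = card Sx"
  obtain h where h: "bij_betw h Sx {0..<n}" using ex_bij_betw_finite_nat[OF finSx] n_def by blast
  have injh: "inj_on h Sx" using h by (simp add: bij_betw_def)
  define F where "F z = h ` {S\<in>Sx. z \<in> S}" for z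
  have Fdiff: "F a - F b \<union> (F b - F a) = h ` T a b" for a b
  proof -
    have "F a - F b = h ` ({S\<in>Sx. a \<in> S} - {S\<in>Sx. b \<in> S})"
      unfolding F_def by (rule inj_on_image_set_diff[OF injh, symmetric]) auto
    moreover have "F b - F a = h ` ({S\<in>Sx. b \<in> S} - {S\<in>Sx. a \<in> S})"
      unfolding F_def by (rule inj_on_image_set_diff[OF injh, symmetric]) auto
    moreover have "T a b = ({S\<in>Sx. a \<in> S} - {S\<in>Sx. b \<in> S}) \<union> ({S\<in>Sx. b \<in> S} - {S\<in>Sx. a \<in> S})"
      by (auto simp: T_def)
    ultimately show ?thesis by (simp add: image_Un)
  qed
  have cardF: "card (F a - F b \<union> (F b - F a)) = d a b" if "a \<in> J" "b \<in> J" for a b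
  proof -
    have "inj_on h (T a b)" using injh by (rule inj_on_subset) (auto simp: T_def)
    then have "card (h ` T a b) = card (T a b)" by (rule card_image)
    then show ?thesis using Fdiff Tcard that by simp
  qed
  have bij: "bij_betw F J (Pow {..<n})"
  proof (rule bij_betw_imageI)
    show "inj_on F J"
    proof (rule inj_onI)
      fix a b assume ab: "a \<in> J" "b \<in> J" "F a = F b"
      then have "d a b = 0" using cardF[OF ab(1,2)] by simp
      then show "a = b" using dist_eq0 ab JV by blast
    qed
  next
    show "F ` J = Pow {..<n}"
    proof
      show "F ` J \<subseteq> Pow {..<n}" using h by (auto simp: F_def bij_betw_def)
    next
      show "Pow {..<n} \<subseteq> F ` J"
      proof
        fix B assume B: "B \<in> Pow {..<n}"
        define A where "A = {S\<in>Sx. h S \<in> B}"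
        have hA: "h ` A = B"
        proof
          show "h ` A \<subseteq> B" by (auto simp: A_def)
        next
          show "B \<subseteq> h ` A"
          proof
            fix i assume "i \<in> B"
            then have "i \<in> h ` Sx" using B h by (auto simp: bij_betw_def)
            then show "i \<in> h ` A" using \<open>i \<in> B\<close> by (auto simp: A_def)
          qed
        qed
        obtain z where z: "z \<in> J" "\<forall>S\<in>Sx. z \<in> S \<longleftrightarrow> S \<in> A" using surj[of A] by (auto simp: A_def)
        have "{S\<in>Sx. z \<in> S} = A" using z by (auto simp: A_def)
        then have "F z = B" using hA by (simp add: F_def)
        then show "B \<in> F ` J" using z by blast
      qed
    qed
  qed
  have adj: "\<forall>a\<in>J. \<forall>b\<in>J. E a b \<longleftrightarrow> card ((F a - F b) \<union> (F b - F a)) = 1"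
    using cardF edge_iff JV by (metis subsetD)
  have "is_cube V E J" unfolding is_cube_def using JV bij adj by blast
  then show ?thesis using fJ by blast
qed

end

lemma rtranclp_sym_rel: assumes "\<And>a b. r a b \<Longrightarrow> r b a" "r\<^sup>*\<^sup>* x y" shows "r\<^sup>*\<^sup>* y x"
  using assms(2)
proof (induction rule: rtranclp_induct)
  case base then show ?case by simp
next
  case (step y z)
  then show ?case using assms(1) by (meson converse_rtranclp_into_rtranclp)
qed

context mg
begin

lemma par_sym: assumes "elem_parallel V E e e'" shows "elem_parallel V E e' e"
proof -
  obtain a b c d where h: "e = {a, b}" "e' = {c, d}" "{a, b, c, d} \<subseteq> V"
      "E a b" "E c d" "E a c" "E b d" "e \<inter> e' = {}"
    using assms unfolding elem_parallel_def by blast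
  have "{c, d, a, b} \<subseteq> V" using h(3) by auto
  moreover have "e' \<inter> e = {}" using h(8) by blast
  moreover have "E c a" "E d b" using sym h by auto
  ultimately show ?thesis unfolding elem_parallel_def using h(1,2,5,4)
    by (intro exI[of _ c] exI[of _ d] exI[of _ a] exI[of _ b]) simp
qed


lemma class_orient:
  assumes uv: "u \<in> V" "v \<in> V" "E u v" and h: "(elem_parallel V E)\<^sup>*\<^sup>* {u, v} e"
  shows "\<exists>x y. e = {x, y} \<and> x \<in> V \<and> y \<in> V \<and> E x y \<and> W x y = W u v"
  using h
proof (induction rule: rtranclp_induct)
  case base then show ?case using uv by blast
next
  case (step e e')
  obtain x y where xy: "e = {x, y}" "x \<in> V" "y \<in> V" "E x y" "W x y = W u v" using step.IH by blast
  obtain a b c dd where p: "e = {a, b}" "e' = {c, dd}" "{a, b, c, dd} \<subseteq> V" "E a b" "E c dd" "E a c" "E b dd"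
      "e \<inter> e' = {}"
    using step.hyps(2) unfolding elem_parallel_def by blast
  have V: "a \<in> V" "b \<in> V" "c \<in> V" "dd \<in> V" using p(3) by auto
  have ne: "a \<noteq> dd" "b \<noteq> c" "a \<noteq> c" "b \<noteq> dd" using p(1,2,8) by auto
  have "{a, b} = {x, y}" using p(1) xy(1) by simp
  then have "(a = x \<and> b = y) \<or> (a = y \<and> b = x)" by (simp add: doubleton_eq_iff)
  then show ?case
  proof
    assume "a = x \<and> b = y"
    then have "W c dd = W u v" using sq_W[OF V p(4-7) ne(1,2)] xy(5) by simp
    then show ?thesis using p(2) V p(5) by blast
  next
    assume ab: "a = y \<and> b = x"
    have Eba: "E b a" "E dd c" using sym V p by blast+
    have "W b a = W dd c" using sq_W[OF V(2,1,4,3) Eba(1) Eba(2) p(7) p(6)] ne by simp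
    then have "W dd c = W u v" using ab xy(5) by simp
    moreover have "e' = {dd, c}" using p(2) by auto
    ultimately show ?thesis using V Eba by blast
  qed
qed

lemma class_cross:
  assumes uv: "u \<in> V" "v \<in> V" "E u v" and h: "(elem_parallel V E)\<^sup>*\<^sup>* {u, v} e"
  shows "\<exists>x y. e = {x, y} \<and> x \<in> V \<and> y \<in> V \<and> E x y \<and> x \<in> W u v \<and> y \<notin> W u v"
proof -
  obtain x y where xy: "e = {x, y}" "x \<in> V" "y \<in> V" "E x y" "W x y = W u v" using class_orient[OF uv h] by blast
  have "x \<in> W x y" using in_W_self xy by blast
  moreover have "y \<notin> W x y" by (simp add: W_def)
  ultimately show ?thesis using xy by auto
qed

end

locale mgH = mg +
  fixes u v
  assumes uV: "u \<in> V" and vV: "v \<in> V" and Euv: "E u v"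
begin

definition H where "H = {e'. (elem_parallel V E)\<^sup>*\<^sup>* {u, v} e'}"

definition comp where
  "comp x = {y\<in>V. \<exists>xs. is_path V (\<lambda>a b. E a b \<and> {a, b} \<notin> H) xs \<and> hd xs = x \<and> last xs = y}"

lemma H_cross: "e \<in> H \<Longrightarrow> \<exists>x y. e = {x, y} \<and> x \<in> V \<and> y \<in> V \<and> E x y \<and> x \<in> W u v \<and> y \<notin> W u v"
  using class_cross[OF uV vV Euv] by (simp add: H_def)

lemma H_edge: "e \<in> H \<Longrightarrow> \<exists>x y. e = {x, y} \<and> x \<in> V \<and> y \<in> V \<and> E x y"
  using H_cross by blast

lemma uv_H: "{u, v} \<in> H" by (simp add: H_def)

lemma comp_refl: "x \<in> V \<Longrightarrow> x \<in> comp x"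
  unfolding comp_def by (rule CollectI, intro conjI exI[of _ "[x]"]) auto

lemma comp_sub: "comp x \<subseteq> V" by (auto simp: comp_def)

lemma comp_step:
  assumes "y \<in> comp x" "z \<in> V" "E y z" "{y, z} \<notin> H"
  shows "z \<in> comp x"
proof -
  obtain xs where xs: "is_path V (\<lambda>a b. E a b \<and> {a, b} \<notin> H) xs" "hd xs = x" "last xs = y" "y \<in> V"
    using assms(1) by (auto simp: comp_def)
  have "is_path V (\<lambda>a b. E a b \<and> {a, b} \<notin> H) [y, z]" using assms xs(4) by (simp add: is_path_Cons)
  then have "is_path V (\<lambda>a b. E a b \<and> {a, b} \<notin> H) (xs @ tl [y, z])" using xs by (intro is_path_append) auto
  moreover have "hd (xs @ tl [y, z]) = x" using xs by (cases xs) (auto simp: is_path_def)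
  moreover have "last (xs @ tl [y, z]) = z" by simp
  ultimately show ?thesis using assms(2) unfolding comp_def by blast
qed

lemma comp_sym: assumes "y \<in> comp x" "x \<in> V" shows "x \<in> comp y"
proof -
  obtain xs where xs: "is_path V (\<lambda>a b. E a b \<and> {a, b} \<notin> H) xs" "hd xs = x" "last xs = y"
    using assms(1) by (auto simp: comp_def)
  have "is_path V (\<lambda>a b. E a b \<and> {a, b} \<notin> H) (rev xs)"
    using xs(1) sym by (intro is_path_rev) (auto simp: insert_commute)
  moreover have "xs \<noteq> []" using xs(1) by (simp add: is_path_def)
  ultimately show ?thesis using xs assms(2) unfolding comp_def by (auto simp: hd_rev last_rev)
qed

lemma comp_trans: assumes "y \<in> comp x" "z \<in> comp y" shows "z \<in> comp x"
proof -
  obtain xs where xs: "is_path V (\<lambda>a b. E a b \<and> {a, b} \<notin> H) xs" "hd xs = x" "last xs = y"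
    using assms(1) by (auto simp: comp_def)
  obtain ys where ys: "is_path V (\<lambda>a b. E a b \<and> {a, b} \<notin> H) ys" "hd ys = y" "last ys = z" "z \<in> V"
    using assms(2) by (auto simp: comp_def)
  have "is_path V (\<lambda>a b. E a b \<and> {a, b} \<notin> H) (xs @ tl ys)" using xs ys by (intro is_path_append) auto
  moreover have "hd (xs @ tl ys) = x" using xs by (cases xs) (auto simp: is_path_def)
  moreover have "last (xs @ tl ys) = z" using xs ys by (cases ys) (auto simp: is_path_def)
  ultimately show ?thesis using ys(4) unfolding comp_def by blast
qed

lemma comp_eq: assumes "y \<in> comp x" "x \<in> V" shows "comp y = comp x"
proof
  show "comp y \<subseteq> comp x" using comp_trans[OF assms(1)] by blast
next
  have "x \<in> comp y" using comp_sym[OF assms] .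
  then show "comp x \<subseteq> comp y" using comp_trans by blast
qed

lemma H_sides:
  assumes "{a, b} \<in> H"
  shows "(W a b = W u v \<or> W a b = W v u)"
proof -
  have "(elem_parallel V E)\<^sup>*\<^sup>* {u, v} {a, b}" using assms by (simp add: H_def)
  from class_orient[OF uV vV Euv this]
  obtain x y where xy: "{a, b} = {x, y}" "x \<in> V" "y \<in> V" "E x y" "W x y = W u v" by blast
  then have "(a = x \<and> b = y) \<or> (a = y \<and> b = x)" by (simp add: doubleton_eq_iff)
  then show ?thesis
  proof
    assume "a = x \<and> b = y" then show ?thesis using xy by simp
  next
    assume ab: "a = y \<and> b = x"
    have "W b a = W u v" using ab xy by simp
    moreover have "E b a" using ab xy by simp
    then have "V - W b a = W a b" using W_compl[of b a] xy ab by simp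
    moreover have "V - W u v = W v u" using W_compl uV vV Euv by simp
    ultimately show ?thesis by simp
  qed
qed

lemma not_H_same:
  assumes "a \<in> S" "c \<in> S" "S = W u v \<or> S = W v u"
  shows "{a, c} \<notin> H"
proof
  assume "{a, c} \<in> H"
  then obtain x y where xy: "{a, c} = {x, y}" "x \<in> W u v" "y \<notin> W u v" "y \<in> V" using H_cross by blast
  have c: "V - W u v = W v u" using W_compl uV vV Euv by simp
  have yW: "y \<in> W v u" using xy(3,4) c by blast
  have xW: "x \<notin> W v u" using xy(2) c by blast
  have "(a = x \<and> c = y) \<or> (a = y \<and> c = x)" using xy(1) by (simp add: doubleton_eq_iff)
  then show False using assms(1,2,3) xy(2,3) yW xW by blast
qed

lemma H_comps: assumes "e \<in> H" shows "\<exists>p q. e = {p, q} \<and> p \<in> comp u \<and> q \<in> comp v"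
proof -
  have r: "(elem_parallel V E)\<^sup>*\<^sup>* {u, v} e" using assms by (simp add: H_def)
  then show ?thesis
proof (induction rule: rtranclp_induct)
  case base then show ?case using comp_refl uV vV by blast
next
  case (step e e')
  obtain p q where pq: "e = {p, q}" "p \<in> comp u" "q \<in> comp v" using step.IH by blast
  obtain a b c dd where par: "e = {a, b}" "e' = {c, dd}" "{a, b, c, dd} \<subseteq> V" "E a b" "E c dd" "E a c" "E b dd"
      "e \<inter> e' = {}"
    using step.hyps(2) unfolding elem_parallel_def by blast
  have V: "a \<in> V" "b \<in> V" "c \<in> V" "dd \<in> V" using par(3) by auto
  have ne: "a \<noteq> dd" "b \<noteq> c" using par(1,2,8) by auto
  have eH: "{a, b} \<in> H" using step.hyps(1) par(1) by (simp add: H_def)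
  have Eba: "E b a" "E dd c" using sym V par by blast+
  have eH': "{b, a} \<in> H" using eH by (simp add: insert_commute)
  have sq1: "W a b = W c dd" using sq_W[OF V par(4-7) ne] .
  have sq2: "W b a = W dd c" using sq_W[OF V(2,1,4,3) Eba(1) Eba(2) par(7) par(6)] ne by simp
  have ac: "{a, c} \<notin> H"
    using not_H_same[of a "W a b" c] H_sides[OF eH] in_W_self[OF V(1,2) par(4)] in_W_self[OF V(3,4) par(5)] sq1
    by simp
  have bd: "{b, dd} \<notin> H"
    using not_H_same[of b "W b a" dd] H_sides[OF eH'] in_W_self[OF V(2,1) Eba(1)] in_W_self[OF V(4,3) Eba(2)] sq2
    by simp
  have "(a = p \<and> b = q) \<or> (a = q \<and> b = p)" using pq(1) par(1) by (auto simp: doubleton_eq_iff)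
  then show ?case
  proof
    assume h: "a = p \<and> b = q"
    have "c \<in> comp u" using comp_step[of a u c] h pq(2) V(3) par(6) ac by blast
    moreover have "dd \<in> comp v" using comp_step[of b v dd] h pq(3) V(4) par(7) bd by blast
    ultimately show ?thesis using par(2) by blast
  next
    assume h: "a = q \<and> b = p"
    have "c \<in> comp v" using comp_step[of a v c] h pq(3) V(3) par(6) ac by blast
    moreover have "dd \<in> comp u" using comp_step[of b u dd] h pq(2) V(4) par(7) bd by blast
    moreover have "e' = {dd, c}" using par(2) by auto
    ultimately show ?thesis by blast
  qed
qed
qed

lemma comp_cases: "x \<in> V \<Longrightarrow> x \<in> comp u \<or> x \<in> comp v"
proof -
  have "\<forall>x. x \<in> V \<longrightarrow> d x u = n \<longrightarrow> x \<in> comp u \<or> x \<in> comp v" for n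
  proof (induction n)
    case 0 then show ?case using dist_eq0 uV comp_refl by blast
  next
    case (Suc n)
    show ?case
    proof (intro allI impI)
      fix x assume x: "x \<in> V" "d x u = Suc n"
      then have "x \<noteq> u" using uV by auto
      then obtain x' where x': "x' \<in> V" "E x x'" "d x' u + 1 = d x u" using step_toward x uV by blast
      have IH: "x' \<in> comp u \<or> x' \<in> comp v" using Suc.IH x' x by auto
      have Ex'x: "E x' x" using sym x x' by blast
      show "x \<in> comp u \<or> x \<in> comp v"
      proof (cases "{x', x} \<in> H")
        case True
        then obtain p q where "{x', x} = {p, q}" "p \<in> comp u" "q \<in> comp v" using H_comps by blast
        then show ?thesis by (auto simp: doubleton_eq_iff)
      next
        case False
        then show ?thesis using IH comp_step[of x' _ x] x Ex'x by blast
      qed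
    qed
  qed
  then show "x \<in> V \<Longrightarrow> x \<in> comp u \<or> x \<in> comp v" by blast
qed

lemma comp_two: assumes "x \<in> V" shows "comp x = comp u \<or> comp x = comp v"
proof -
  have "x \<in> comp u \<or> x \<in> comp v" using comp_cases assms by blast
  then show ?thesis
  proof
    assume "x \<in> comp u" then have "comp x = comp u" using comp_eq uV by blast
    then show ?thesis by blast
  next
    assume "x \<in> comp v" then have "comp x = comp v" using comp_eq vV by blast
    then show ?thesis by blast
  qed
qed

end

lemma gdist_le_gen:
  assumes "is_path V E xs"
  shows "gdist V E (hd xs) (last xs) \<le> length xs - 1"
proof -
  have "\<exists>ys. is_path V E ys \<and> hd ys = hd xs \<and> last ys = last xs \<and> length ys = Suc (length xs - 1)"
    using assms by (intro exI[of _ xs]) (auto simp: is_path_def)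
  then show ?thesis unfolding gdist_def by (rule Least_le)
qed

lemma gdist_ex_gen:
  assumes "connected_graph V E" "x \<in> V" "y \<in> V"
  shows "\<exists>xs. is_path V E xs \<and> hd xs = x \<and> last xs = y \<and> length xs = Suc (gdist V E x y)"
proof -
  obtain xs where "is_path V E xs" "hd xs = x" "last xs = y" using assms unfolding connected_graph_def by blast
  then have "\<exists>n xs. is_path V E xs \<and> hd xs = x \<and> last xs = y \<and> length xs = Suc n"
    by (intro exI[of _ "length xs - 1"] exI[of _ xs]) (auto simp: is_path_def)
  then show ?thesis unfolding gdist_def by (rule LeastI_ex)
qed

lemma median_mg: assumes "median_graph V E" shows "mg V E"
proof
  have g: "is_graph V E" using assms by (simp add: median_graph_def)
  show "\<And>x y. x \<in> V \<Longrightarrow> y \<in> V \<Longrightarrow> E x y \<Longrightarrow> E y x" using g by (simp add: is_graph_def)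
  show "\<And>x. x \<in> V \<Longrightarrow> \<not> E x x" using g by (auto simp: is_graph_def)
  show "connected_graph V E" using assms by (simp add: median_graph_def)
  show "\<And>x y z. x \<in> V \<Longrightarrow> y \<in> V \<Longrightarrow> z \<in> V \<Longrightarrow> \<exists>!m. m \<in> interval V E x y \<inter> interval V E y z \<inter> interval V E x z"
    using assms by (simp add: median_graph_def)
qed

context mg
begin

lemma geo_in_I:
  "\<And>x. x \<in> V \<Longrightarrow> y \<in> V \<Longrightarrow> d x y = n \<Longrightarrow>
    \<exists>xs. is_path V E xs \<and> hd xs = x \<and> last xs = y \<and> length xs = Suc (d x y) \<and> set xs \<subseteq> I x y"
proof (induction n)
  case 0
  then have "x = y" using dist_eq0 by blast
  then show ?case using 0 by (intro exI[of _ "[x]"]) (auto simp: in_I)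
next
  case (Suc n x)
  then have "x \<noteq> y" by auto
  then obtain x' where x': "x' \<in> V" "E x x'" "d x' y + 1 = d x y" using step_toward Suc.prems by blast
  have dxx: "d x x' = 1" using edge_dist x' Suc.prems by blast
  have x'I: "x' \<in> I x y" using x' dxx by (simp add: in_I)
  obtain xs where xs: "is_path V E xs" "hd xs = x'" "last xs = y" "length xs = Suc (d x' y)" "set xs \<subseteq> I x' y"
    using Suc.IH[of x'] x' Suc.prems by auto
  have "is_path V E (x # xs)" using xs Suc.prems x' by (simp add: is_path_Cons)
  moreover have "set (x # xs) \<subseteq> I x y" using xs(5) I_sub[OF Suc.prems(1,2) x'I] Suc.prems by (auto simp: in_I)
  moreover have "last (x # xs) = y" using xs by (cases xs) (auto simp: is_path_def)
  ultimately show ?case using xs x' by (intro exI[of _ "x # xs"]) auto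
qed

lemma convex_sub:
  assumes YV: "Y \<subseteq> V" and cv: "\<forall>x\<in>Y. \<forall>y\<in>Y. I x y \<subseteq> Y"
  shows "mg Y E" and "\<And>x y. x \<in> Y \<Longrightarrow> y \<in> Y \<Longrightarrow> gdist Y E x y = d x y"
proof -
  have gp: "\<exists>xs. is_path Y E xs \<and> hd xs = x \<and> last xs = y \<and> length xs = Suc (d x y)" if xy: "x \<in> Y" "y \<in> Y" for x y
  proof -
    have "x \<in> V" "y \<in> V" using xy YV by auto
    then obtain xs where xs: "is_path V E xs" "hd xs = x" "last xs = y" "length xs = Suc (d x y)" "set xs \<subseteq> I x y"
      using geo_in_I[of x y "d x y"] by blast
    have "set xs \<subseteq> Y" using xs(5) cv xy by blast
    then have "is_path Y E xs" using xs(1) by (simp add: is_path_def)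
    then show ?thesis using xs by blast
  qed
  have conY: "connected_graph Y E" unfolding connected_graph_def using gp by blast
  show gd: "gdist Y E x y = d x y" if xy: "x \<in> Y" "y \<in> Y" for x y
  proof -
    obtain xs where xs: "is_path Y E xs" "hd xs = x" "last xs = y" "length xs = Suc (d x y)" using gp xy by blast
    have le1: "gdist Y E x y \<le> d x y" using gdist_le_gen[OF xs(1)] xs by simp
    obtain ys where ys: "is_path Y E ys" "hd ys = x" "last ys = y" "length ys = Suc (gdist Y E x y)"
      using gdist_ex_gen[OF conY xy] by blast
    have "is_path V E ys" by (rule is_path_mono[of Y E ys V E]) (use ys(1) YV in auto)
    then have "d x y \<le> gdist Y E x y" using dist_le ys by fastforce
    then show ?thesis using le1 by simp
  qed
  have intv: "interval Y E x y = I x y" if xy: "x \<in> Y" "y \<in> Y" for x y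
  proof
    show "interval Y E x y \<subseteq> I x y" using gd xy YV by (auto simp: interval_def)
  next
    show "I x y \<subseteq> interval Y E x y"
    proof
      fix w assume w: "w \<in> I x y"
      then have wY: "w \<in> Y" using cv xy by blast
      then show "w \<in> interval Y E x y" using w gd xy by (auto simp: interval_def)
    qed
  qed
  show "mg Y E"
  proof
    show "\<And>x y. x \<in> Y \<Longrightarrow> y \<in> Y \<Longrightarrow> E x y \<Longrightarrow> E y x" using sym YV by blast
    show "\<And>x. x \<in> Y \<Longrightarrow> \<not> E x x" using irr YV by blast
    show "connected_graph Y E" using conY .
    fix x y z assume xyz: "x \<in> Y" "y \<in> Y" "z \<in> Y"
    show "\<exists>!m. m \<in> interval Y E x y \<inter> interval Y E y z \<inter> interval Y E x z"
      using med[of x y z] xyz YV intv by (simp add: subset_iff)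
  qed
qed

end


locale qs =
  fixes G :: "('g, 'b) monoid_scheme" and V :: "'v set" and E :: "'v \<Rightarrow> 'v \<Rightarrow> bool"
    and act :: "'g \<Rightarrow> 'v \<Rightarrow> 'v" and Y :: "'v set" and \<phi> :: 'g
  assumes uc: "universal_cover_of_compact_npc G V E act"
    and ql: "quasiline G V E act Y \<phi>"
begin

lemma grp: "group G" using uc by (simp add: universal_cover_of_compact_npc_def cubical_action_def)

lemma phi: "\<phi> \<in> carrier G" "\<phi> \<noteq> \<one>\<^bsub>G\<^esub>" using ql by (auto simp: quasiline_def)

lemma mgV: "mg V E" using uc median_mg unfolding universal_cover_of_compact_npc_def by blast

lemma YV: "Y \<subseteq> V" using ql by (simp add: quasiline_def convex_subcomplex_def)

lemma mgY: "mg Y E"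
  using mg.convex_sub(1)[OF mgV YV] ql by (simp add: quasiline_def convex_subcomplex_def)

definition A :: "int \<Rightarrow> 'v \<Rightarrow> 'v" where "A n = act (\<phi> [^]\<^bsub>G\<^esub> n)"

lemma pow_car: "\<phi> [^]\<^bsub>G\<^esub> (n::int) \<in> carrier G" using group.int_pow_closed[OF grp phi(1)] .

lemma act_props:
  "\<forall>g\<in>carrier G. bij_betw (act g) V V \<and> (\<forall>x\<in>V. \<forall>y\<in>V. E x y \<longleftrightarrow> E (act g x) (act g y))"
  "\<forall>x\<in>V. act \<one>\<^bsub>G\<^esub> x = x"
  "\<forall>g\<in>carrier G. \<forall>h\<in>carrier G. \<forall>x\<in>V. act (g \<otimes>\<^bsub>G\<^esub> h) x = act g (act h x)"
  using uc by (auto simp: universal_cover_of_compact_npc_def cubical_action_def)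

lemma A_add: "x \<in> V \<Longrightarrow> A (m + n) x = A m (A n x)"
proof -
  assume x: "x \<in> V"
  have "\<phi> [^]\<^bsub>G\<^esub> (m + n) = \<phi> [^]\<^bsub>G\<^esub> m \<otimes>\<^bsub>G\<^esub> \<phi> [^]\<^bsub>G\<^esub> n"
    using group.int_pow_mult[OF grp phi(1)] .
  then show ?thesis using act_props(3) pow_car x by (simp add: A_def)
qed

lemma A_one: "\<phi> [^]\<^bsub>G\<^esub> n = \<one>\<^bsub>G\<^esub> \<Longrightarrow> x \<in> V \<Longrightarrow> A n x = x"
  using act_props(2) by (simp add: A_def)

lemma A_0: "x \<in> V \<Longrightarrow> A 0 x = x"
  using A_one by simp

lemma A_bij: "bij_betw (A n) V V" using act_props(1) pow_car by (simp add: A_def)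

lemma A_V: "x \<in> V \<Longrightarrow> A n x \<in> V" using A_bij by (auto simp: bij_betw_def)

lemma A_inj: "inj_on (A n) V" using A_bij by (simp add: bij_betw_def)

lemma A_E: assumes "x \<in> V" "y \<in> V" shows "E (A n x) (A n y) \<longleftrightarrow> E x y"
proof -
  have "\<forall>x\<in>V. \<forall>y\<in>V. E x y \<longleftrightarrow> E (A n x) (A n y)" using act_props(1) pow_car[of n] unfolding A_def by blast
  then show ?thesis using assms by blast
qed

lemma cyc: "cyclic_subgroup G \<phi> = {\<phi> [^]\<^bsub>G\<^esub> (n::int) | n. True}" by (simp add: cyclic_subgroup_def)

lemma A_Y: "A n ` Y = Y"
proof -
  have "\<phi> [^]\<^bsub>G\<^esub> n \<in> cyclic_subgroup G \<phi>" by (auto simp: cyclic_subgroup_def)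
  then show ?thesis using ql by (simp add: quasiline_def A_def)
qed

lemma A_Ymem: "x \<in> Y \<Longrightarrow> A n x \<in> Y" using A_Y by blast

lemma A_inv: "x \<in> V \<Longrightarrow> A (- n) (A n x) = x"
  using A_add[of x "- n" n] A_0 by simp

lemma A_aut: "mg.aut Y E (A n)"
proof -
  have "bij_betw (A n) Y Y" using A_Y inj_on_subset[OF A_inj YV] by (simp add: bij_betw_def)
  moreover have "\<forall>x\<in>Y. \<forall>y\<in>Y. E x y \<longleftrightarrow> E (A n x) (A n y)" using A_E YV by blast
  ultimately show ?thesis using mg.aut_def[OF mgY] by blast
qed

lemma irrV: "x \<in> V \<Longrightarrow> \<not> E x x" using mg.irr[OF mgV] .

lemma cube_single: assumes "x \<in> W" "\<not> E x x" shows "is_cube W E {x}"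
proof -
  have "bij_betw (\<lambda>_. {}::nat set) {x} (Pow {..<0})" by (auto simp: bij_betw_def)
  then show ?thesis unfolding is_cube_def using assms by (intro conjI exI[of _ 0] exI[of _ "\<lambda>_. {}"]) auto
qed

lemma free_cube: assumes "is_cube V E S" "A n ` S = S" shows "\<phi> [^]\<^bsub>G\<^esub> n = \<one>\<^bsub>G\<^esub>"
  using uc assms pow_car unfolding universal_cover_of_compact_npc_def free_action_def A_def by blast

lemma free_fix: assumes "x \<in> V" "A n x = x" shows "\<phi> [^]\<^bsub>G\<^esub> n = \<one>\<^bsub>G\<^esub>"
  using free_cube[OF cube_single[OF assms(1) irrV[OF assms(1)]]] assms(2) by simp

lemma cube_Y_V: "is_cube Y E S \<Longrightarrow> is_cube V E S"
  using YV unfolding is_cube_def by blast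

lemma A_period: assumes "\<phi> [^]\<^bsub>G\<^esub> N = \<one>\<^bsub>G\<^esub>" "x \<in> V" shows "A (N * q + r) x = A r x"
proof -
  have "\<phi> [^]\<^bsub>G\<^esub> (N * q) = \<one>\<^bsub>G\<^esub>"
    using group.int_pow_pow[OF grp phi(1), of N q] assms(1) group.int_pow_one[OF grp] by simp
  then show ?thesis using A_add A_one A_V assms(2) by simp
qed

lemma fixed_same: assumes "v \<in> V" "p \<in> V" "q \<in> V" "A n p = v" "A m p = v" shows "A n q = A m q"
proof -
  have "A (n - m) v = v" using A_add[of p "n - m" m] assms by simp
  then have "\<phi> [^]\<^bsub>G\<^esub> (n - m) = \<one>\<^bsub>G\<^esub>" using free_fix assms(1) by blast
  then have "A (n - m) (A m q) = A m q" using A_one A_V assms(3) by blast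
  then show ?thesis using A_add[of q "n - m" m] assms(3) by simp
qed

definition orb :: "'v set \<Rightarrow> 'v set set" where
  "orb S = {act g ` S | g. g \<in> cyclic_subgroup G \<phi>}"

lemma orb_eq: "orb S = {A n ` S | n. True}"
  unfolding orb_def cyc A_def by blast

lemma reps:
  assumes K: "K \<subseteq> {S. is_cube Y E S}"
  shows "\<exists>R\<subseteq>K. finite R \<and> (\<forall>S\<in>K. \<exists>T\<in>R. \<exists>n. S = A n ` T)"
proof -
  have fin: "finite (orb ` {S. is_cube Y E S})"
    using ql unfolding quasiline_def cocompact_on_def orb_def by (simp add: image_def setcompr_eq_image)
  have finK: "finite (orb ` K)" using finite_subset[OF image_mono[OF K] fin] .
  define rep where "rep ob = (SOME T. T \<in> K \<and> orb T = ob)" for ob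
  define R where "R = rep ` (orb ` K)"
  have repK: "rep (orb S) \<in> K \<and> orb (rep (orb S)) = orb S" if "S \<in> K" for S
    unfolding rep_def by (rule someI_ex) (use that in blast)
  have "R \<subseteq> K" using repK by (auto simp: R_def)
  moreover have "finite R" using finK by (simp add: R_def)
  moreover have "\<exists>T\<in>R. \<exists>n. S = A n ` T" if S: "S \<in> K" for S
  proof -
    have SY: "S \<subseteq> Y" using S K by (auto simp: is_cube_def)
    have h0: "\<forall>x\<in>S. A 0 x = x" using A_0 SY YV by blast
    have "A 0 ` S = (\<lambda>x. x) ` S" by (rule image_cong) (use h0 in auto)
    then have "A 0 ` S = S" by simp
    then have "S \<in> orb S" unfolding orb_eq by blast
    then have "S \<in> orb (rep (orb S))" using repK[OF S] by simp
    then obtain n where "S = A n ` rep (orb S)" unfolding orb_eq by blast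
    moreover have "rep (orb S) \<in> R" using S by (simp add: R_def)
    ultimately show ?thesis by blast
  qed
  ultimately show ?thesis by blast
qed

lemma vertex_reps: "\<exists>R. finite R \<and> R \<subseteq> Y \<and> (\<forall>y\<in>Y. \<exists>r\<in>R. \<exists>n. y = A n r)"
proof -
  have K: "{{x} | x. x \<in> Y} \<subseteq> {S. is_cube Y E S}" using cube_single irrV YV by blast
  obtain R where R: "R \<subseteq> {{x} | x. x \<in> Y}" "finite R" "\<forall>S\<in>{{x} | x. x \<in> Y}. \<exists>T\<in>R. \<exists>n. S = A n ` T"
    using reps[OF K] by blast
  have "finite (\<Union>R)" using R by auto
  moreover have "\<Union>R \<subseteq> Y" using R by auto
  moreover have "\<exists>r\<in>\<Union>R. \<exists>n. y = A n r" if y: "y \<in> Y" for y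
  proof -
    have "{y} \<in> {{x} | x. x \<in> Y}" using y by blast
    from R(3)[rule_format, OF this] obtain T n where T: "T \<in> R" "{y} = A n ` T" by blast
    then obtain r where "T = {r}" using R(1) by blast
    then show ?thesis using T by auto
  qed
  ultimately show ?thesis by (intro exI[of _ "\<Union>R"]) blast
qed

lemma cube_edge: assumes "x \<in> V" "y \<in> V" "E x y" shows "is_cube V E {x, y}"
proof -
  have xy: "x \<noteq> y" using assms irrV by blast
  define f where "f z = (if z = x then {} else {0::nat})" for z
  have "bij_betw f {x, y} (Pow {..<1})"
  proof -
    have "{..<(1::nat)} = {0}" by auto
    then have "Pow {..<(1::nat)} = {{}, {0}}" by (simp add: Pow_insert insert_commute)
    then show ?thesis using xy by (auto simp: bij_betw_def f_def inj_on_def)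
  qed
  moreover have "\<forall>a\<in>{x, y}. \<forall>b\<in>{x, y}. E a b \<longleftrightarrow> card ((f a - f b) \<union> (f b - f a)) = 1"
    using assms xy irrV mg.sym[OF mgV] by (auto simp: f_def)
  ultimately show ?thesis unfolding is_cube_def using assms by blast
qed

lemma edge_reps: "\<exists>R. finite R \<and> (\<forall>e\<in>R. e \<subseteq> Y \<and> finite e) \<and> (\<forall>a\<in>Y. \<forall>b\<in>Y. E a b \<longrightarrow> (\<exists>e\<in>R. \<exists>n. {a, b} = A n ` e))"
proof -
  have K: "{{a, b} | a b. a \<in> Y \<and> b \<in> Y \<and> E a b} \<subseteq> {S. is_cube Y E S}"
  proof
    fix S assume "S \<in> {{a, b} | a b. a \<in> Y \<and> b \<in> Y \<and> E a b}"
    then obtain a b where ab: "S = {a, b}" "a \<in> Y" "b \<in> Y" "E a b" by blast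
    then have "is_cube V E {a, b}" using cube_edge YV by blast
    then show "S \<in> {S. is_cube Y E S}" using ab by (auto simp: is_cube_def)
  qed
  obtain R where R: "R \<subseteq> {{a, b} | a b. a \<in> Y \<and> b \<in> Y \<and> E a b}" "finite R"
      "\<forall>S\<in>{{a, b} | a b. a \<in> Y \<and> b \<in> Y \<and> E a b}. \<exists>T\<in>R. \<exists>n. S = A n ` T"
    using reps[OF K] by blast
  have "\<forall>e\<in>R. e \<subseteq> Y \<and> finite e" using R(1) by blast
  moreover have "\<forall>a\<in>Y. \<forall>b\<in>Y. E a b \<longrightarrow> (\<exists>e\<in>R. \<exists>n. {a, b} = A n ` e)" using R(3) by blast
  ultimately show ?thesis using R(2) by blast
qed

lemma locfin: assumes v: "v \<in> Y" shows "finite {w\<in>Y. E v w}"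
proof -
  obtain R where R: "finite R" "\<forall>e\<in>R. e \<subseteq> Y \<and> finite e" "\<forall>a\<in>Y. \<forall>b\<in>Y. E a b \<longrightarrow> (\<exists>e\<in>R. \<exists>n. {a, b} = A n ` e)"
    using edge_reps by blast
  have finE: "finite e" if "e \<in> R" for e using R(2) that by blast
  define B where "B = (\<Union>e\<in>R. \<Union>p\<in>e. \<Union>q\<in>e. {A n q | n. A n p = v})"
  have sub: "{w\<in>Y. E v w} \<subseteq> B"
  proof
    fix w assume w: "w \<in> {w\<in>Y. E v w}"
    then obtain e n where e: "e \<in> R" "{v, w} = A n ` e" using R(3) v by blast
    obtain p where p: "p \<in> e" "A n p = v" using e(2) by (metis imageE insertI1)
    obtain q where q: "q \<in> e" "A n q = w" using e(2) by (metis imageE insert_iff)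
    show "w \<in> B" unfolding B_def using e p q by blast
  qed
  have "finite B"
    unfolding B_def
  proof (intro finite_UN_I)
    fix e p q assume "e \<in> R" "p \<in> e" "q \<in> e"
    then have pq: "p \<in> V" "q \<in> V" using R(2) YV by blast+
    have "{A n q | n. A n p = v} \<subseteq> {A (SOME n. A n p = v) q}"
    proof
      fix w assume "w \<in> {A n q | n. A n p = v}"
      then obtain n where n: "w = A n q" "A n p = v" by blast
      have "A (SOME n. A n p = v) p = v" using someI[of "\<lambda>n. A n p = v" n] n(2) by simp
      then have "A n q = A (SOME n. A n p = v) q" using fixed_same[of v p q n] pq v YV n(2) by blast
      then show "w \<in> {A (SOME n. A n p = v) q}" using n by simp
    qed
    then show "finite {A n q | n. A n p = v}" using finite_subset by blast
  qed (use R(1) finE in auto)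
  then show ?thesis using sub finite_subset by blast
qed


lemma ball_fin: assumes v: "v \<in> Y" shows "finite {w\<in>Y. gdist Y E v w \<le> R}"
proof (induction R)
  case 0
  interpret Ym: mg Y E by (rule mgY)
  have "{w\<in>Y. gdist Y E v w \<le> 0} \<subseteq> {v}" using Ym.dist_eq0 v by auto
  then show ?case using finite_subset by blast
next
  case (Suc R)
  interpret Ym: mg Y E by (rule mgY)
  define B where "B = {w\<in>Y. gdist Y E v w \<le> R}"
  have finB: "finite B" using Suc.IH by (simp add: B_def)
  have sub: "{w\<in>Y. gdist Y E v w \<le> Suc R} \<subseteq> B \<union> (\<Union>w\<in>B. {z\<in>Y. E w z})"
  proof
    fix z assume z: "z \<in> {w\<in>Y. gdist Y E v w \<le> Suc R}"
    then have zY: "z \<in> Y" by blast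
    show "z \<in> B \<union> (\<Union>w\<in>B. {z\<in>Y. E w z})"
    proof (cases "gdist Y E v z \<le> R")
      case True then show ?thesis using zY by (simp add: B_def)
    next
      case False
      then have dz: "gdist Y E v z = Suc R" using z by simp
      then have "z \<noteq> v" using v by auto
      then obtain z' where z': "z' \<in> Y" "E z z'" "gdist Y E z' v + 1 = gdist Y E z v"
        using Ym.step_toward zY v by blast
      have "gdist Y E z v = gdist Y E v z" "gdist Y E z' v = gdist Y E v z'"
        using Ym.dist_sym zY v z'(1) by auto
      then have "z' \<in> B" using z' dz by (simp add: B_def)
      moreover have "E z' z" using Ym.sym z' zY by blast
      ultimately show ?thesis using zY by blast
    qed
  qed
  have "finite (\<Union>w\<in>B. {z\<in>Y. E w z})" using finB locfin by (simp add: B_def)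
  then show ?case using sub finB finite_subset by blast
qed

lemma Y_inf: assumes tf: "\<And>n::int. n \<noteq> 0 \<Longrightarrow> \<phi> [^]\<^bsub>G\<^esub> n \<noteq> \<one>\<^bsub>G\<^esub>" and y: "y \<in> Y" shows "infinite Y"
proof
  assume fin: "finite Y"
  have yV: "y \<in> V" using y YV by blast
  have "inj (\<lambda>n. A n y)"
  proof (rule injI)
    fix n m assume h: "A n y = A m y"
    have "A (n - m) (A m y) = A m y" using A_add[of y "n - m" m] yV h by simp
    then have "\<phi> [^]\<^bsub>G\<^esub> (n - m) = \<one>\<^bsub>G\<^esub>" using free_fix A_V yV by blast
    show "n = m"
    proof (rule ccontr)
      assume "n \<noteq> m"
      then have "n - m \<noteq> 0" by simp
      then show False using tf[OF \<open>n - m \<noteq> 0\<close>] \<open>\<phi> [^]\<^bsub>G\<^esub> (n - m) = \<one>\<^bsub>G\<^esub>\<close> by simp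
    qed
  qed
  moreover have "range (\<lambda>n. A n y) \<subseteq> Y" using A_Ymem y by blast
  then have "finite (range (\<lambda>n. A n y))" using fin finite_subset by blast
  ultimately have "finite (UNIV :: int set)" using finite_imageD by blast
  then show False by simp
qed

lemma Y_fin: fixes N :: int assumes N: "\<phi> [^]\<^bsub>G\<^esub> N = \<one>\<^bsub>G\<^esub>" "N > 0" shows "finite Y"
proof -
  obtain R where R: "finite R" "R \<subseteq> Y" "\<forall>y\<in>Y. \<exists>r\<in>R. \<exists>n. y = A n r" using vertex_reps by blast
  have "Y \<subseteq> (\<Union>r\<in>R. (\<lambda>k. A k r) ` {0..<N})"
  proof
    fix y assume "y \<in> Y"
    then obtain r n where rn: "r \<in> R" "y = A n r" using R by blast
    have rV: "r \<in> V" using rn R YV by blast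
    have "A n r = A (N * (n div N) + n mod N) r" by simp
    also have "\<dots> = A (n mod N) r" using A_period[OF N(1) rV] .
    finally have "y = A (n mod N) r" using rn by simp
    moreover have "n mod N \<in> {0..<N}" using N(2) by simp
    ultimately show "y \<in> (\<Union>r\<in>R. (\<lambda>k. A k r) ` {0..<N})" using rn by blast
  qed
  moreover have "finite (\<Union>r\<in>R. (\<lambda>k. A k r) ` {0..<N})" using R(1) by simp
  ultimately show ?thesis using finite_subset by blast
qed

lemma pow_nat_neg: assumes "\<phi> [^]\<^bsub>G\<^esub> (n::int) = \<one>\<^bsub>G\<^esub>" shows "\<phi> [^]\<^bsub>G\<^esub> (- n) = \<one>\<^bsub>G\<^esub>"
  using group.int_pow_neg[OF grp phi(1), of n] assms monoid.inv_one[OF group.is_monoid[OF grp]] by simp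

lemma torsion_free: fixes n :: int assumes Yne: "Y \<noteq> {}" and n: "n \<noteq> 0" shows "\<phi> [^]\<^bsub>G\<^esub> n \<noteq> \<one>\<^bsub>G\<^esub>"
proof
  assume h: "\<phi> [^]\<^bsub>G\<^esub> n = \<one>\<^bsub>G\<^esub>"
  interpret Ym: mg Y E by (rule mgY)
  define N1 where "N1 = nat \<bar>n\<bar>"
  have N1: "0 < N1" "\<phi> [^]\<^bsub>G\<^esub> (int N1) = \<one>\<^bsub>G\<^esub>"
  proof -
    show "0 < N1" using n by (simp add: N1_def)
    show "\<phi> [^]\<^bsub>G\<^esub> (int N1) = \<one>\<^bsub>G\<^esub>"
    proof (cases "n \<ge> 0")
      case True then show ?thesis using h by (simp add: N1_def)
    next
      case False then have "int N1 = - n" by (simp add: N1_def)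
      then show ?thesis using pow_nat_neg[OF h] by simp
    qed
  qed
  define P where "P k \<longleftrightarrow> 0 < k \<and> \<phi> [^]\<^bsub>G\<^esub> (int k) = \<one>\<^bsub>G\<^esub>" for k
  define N0 where "N0 = (LEAST k. P k)"
  have PN0: "P N0" unfolding N0_def using N1 by (intro LeastI[of P N1]) (simp add: P_def)
  have minN0: "\<phi> [^]\<^bsub>G\<^esub> (int k) \<noteq> \<one>\<^bsub>G\<^esub>" if "0 < k" "k < N0" for k
    using not_less_Least[of k P] that unfolding N0_def P_def by blast
  have N0pos: "0 < N0" and N0one: "\<phi> [^]\<^bsub>G\<^esub> (int N0) = \<one>\<^bsub>G\<^esub>" using PN0 by (auto simp: P_def)
  have N0ne1: "N0 \<noteq> 1"
  proof
    assume "N0 = 1"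
    then have "\<phi> [^]\<^bsub>G\<^esub> (1::int) = \<one>\<^bsub>G\<^esub>" using N0one by simp
    then show False using group.int_pow_1[OF grp phi(1)] phi(2) by simp
  qed
  have finY: "finite Y" using Y_fin[OF N0one] N0pos by simp
  have autA: "Ym.aut (A k)" for k using A_aut .
  show False
  proof (cases "even N0")
    case True
    define M where "M = N0 div 2"
    have M: "0 < M" "M < N0" "int N0 = int M + int M" using True N0pos N0ne1 by (auto simp: M_def)
    have inv: "\<forall>x\<in>Y. A (int M) (A (int M) x) = x"
    proof
      fix x assume "x \<in> Y"
      then have xV: "x \<in> V" using YV by blast
      have "A (int M) (A (int M) x) = A (int N0) x" using A_add[OF xV, of "int M" "int M"] M(3) by simp
      also have "\<dots> = x" using A_one[OF N0one xV] .
      finally show "A (int M) (A (int M) x) = x" .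
    qed
    obtain S where S: "is_cube Y E S" "A (int M) ` S = S" using Ym.inv_cube[OF finY Yne autA inv] by blast
    have "\<phi> [^]\<^bsub>G\<^esub> (int M) = \<one>\<^bsub>G\<^esub>" using free_cube[OF cube_Y_V[OF S(1)] S(2)] .
    then show False using minN0 M by blast
  next
    case False
    obtain x where x: "x \<in> Y" using Yne by blast
    have xV: "x \<in> V" using x YV by blast
    define Ob where "Ob = (\<lambda>k::nat. A (int k) x) ` {0..<N0}"
    have ObY: "Ob \<subseteq> Y" using A_Ymem x by (auto simp: Ob_def)
    have finOb: "finite Ob" by (simp add: Ob_def)
    have injk: "inj_on (\<lambda>k::nat. A (int k) x) {0..<N0}"
    proof (rule inj_onI)
      fix i j assume ij: "i \<in> {0..<N0}" "j \<in> {0..<N0}" "A (int i) x = A (int j) x"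
      show "i = j"
      proof (rule ccontr)
        assume "i \<noteq> j"
        then consider "i < j" | "j < i" by linarith
        then show False
        proof cases
          case 1
          have "A (int j - int i) (A (int i) x) = A (int i) x" using A_add[OF xV, of "int j - int i" "int i"] ij(3) by simp
          then have e1: "\<phi> [^]\<^bsub>G\<^esub> (int j - int i) = \<one>\<^bsub>G\<^esub>" using free_fix A_V xV by blast
          have e2: "int j - int i = int (j - i)" using 1 by simp
          have "\<phi> [^]\<^bsub>G\<^esub> (int (j - i)) = \<one>\<^bsub>G\<^esub>" using e1 unfolding e2 .
          moreover have "0 < j - i" "j - i < N0" using 1 ij(1,2) by auto
          ultimately show False using minN0[of "j - i"] by blast
        next
          case 2
          have "A (int i - int j) (A (int j) x) = A (int j) x" using A_add[OF xV, of "int i - int j" "int j"] ij(3) by simp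
          then have e1: "\<phi> [^]\<^bsub>G\<^esub> (int i - int j) = \<one>\<^bsub>G\<^esub>" using free_fix A_V xV by blast
          have e2: "int i - int j = int (i - j)" using 2 by simp
          have "\<phi> [^]\<^bsub>G\<^esub> (int (i - j)) = \<one>\<^bsub>G\<^esub>" using e1 unfolding e2 .
          moreover have "0 < i - j" "i - j < N0" using 2 ij(1,2) by auto
          ultimately show False using minN0[of "i - j"] by blast
        qed
      qed
    qed
    have cardOb: "card Ob = N0" using card_image[OF injk] by (simp add: Ob_def)
    have img_sub: "A 1 ` Ob \<subseteq> Ob"
    proof
      fix z assume "z \<in> A 1 ` Ob"
      then obtain k where k: "k < N0" "z = A 1 (A (int k) x)" by (auto simp: Ob_def)
      have z: "z = A (int (Suc k)) x" using k A_add[OF xV, of 1 "int k"] by (simp add: add.commute)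
      show "z \<in> Ob"
      proof (cases "Suc k = N0")
        case True
        then have "z = x" using z A_one[OF N0one xV] by simp
        moreover have "x = A (int 0) x" using A_0 xV by simp
        moreover have "(0::nat) \<in> {0..<N0}" using N0pos by simp
        ultimately show ?thesis unfolding Ob_def by (metis image_eqI)
      next
        case False
        then have "Suc k \<in> {0..<N0}" using k by simp
        then show ?thesis using z unfolding Ob_def by (metis image_eqI)
      qed
    qed
    have "card (A 1 ` Ob) = card Ob" using inj_on_subset[OF A_inj] ObY YV by (intro card_image) blast
    then have img: "A 1 ` Ob = Ob" using card_subset_eq[OF finOb img_sub] by simp
    have "odd (card Ob)" using cardOb False by simp
    then obtain m where m: "m \<in> Y" "A 1 m = m" using Ym.odd_fix[OF finY autA ObY img _ finOb] by blast
    then have "\<phi> [^]\<^bsub>G\<^esub> (1::int) = \<one>\<^bsub>G\<^esub>" using free_fix YV by blast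
    then show False using group.int_pow_1[OF grp phi(1)] phi(2) by simp
  qed
qed


lemma A_pair: "A m ` {a, b} = {A m a, A m b}" by simp

lemma par_A: assumes "elem_parallel Y E e e'" shows "elem_parallel Y E (A m ` e) (A m ` e')"
proof -
  obtain a b c d where h: "e = {a, b}" "e' = {c, d}" "{a, b, c, d} \<subseteq> Y"
      "E a b" "E c d" "E a c" "E b d" "e \<inter> e' = {}"
    using assms unfolding elem_parallel_def by blast
  have V: "a \<in> V" "b \<in> V" "c \<in> V" "d \<in> V" using h(3) YV by auto
  have Y': "{A m a, A m b, A m c, A m d} \<subseteq> Y" using h(3) A_Ymem by auto
  have E': "E (A m a) (A m b)" "E (A m c) (A m d)" "E (A m a) (A m c)" "E (A m b) (A m d)"
    using A_E V h by auto
  have ne: "a \<noteq> c" "a \<noteq> d" "b \<noteq> c" "b \<noteq> d" using h(1,2,8) by auto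
  have ne': "A m a \<noteq> A m c" "A m a \<noteq> A m d" "A m b \<noteq> A m c" "A m b \<noteq> A m d"
    using ne V A_inj[of m] unfolding inj_on_def by blast+
  have dj: "{A m a, A m b} \<inter> {A m c, A m d} = {}" using ne' by auto
  show ?thesis unfolding elem_parallel_def h(1,2) A_pair
    by (intro exI[of _ "A m a"] exI[of _ "A m b"] exI[of _ "A m c"] exI[of _ "A m d"]) (use Y' E' dj in simp)
qed

lemma rt_A: assumes "(elem_parallel Y E)\<^sup>*\<^sup>* e e'" shows "(elem_parallel Y E)\<^sup>*\<^sup>* (A m ` e) (A m ` e')"
  using assms
proof (induction rule: rtranclp_induct)
  case base then show ?case by simp
next
  case (step y z) then show ?case using par_A[of y z m] by (meson rtranclp.rtrancl_into_rtrancl)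
qed

lemma deep_iff:
  assumes C: "carrier_vertices H = C" "finite C" "u \<in> C" "C \<subseteq> Y" and h: "h \<subseteq> Y"
  shows "deep Y E H h \<longleftrightarrow> infinite h"
proof
  assume dp: "deep Y E H h"
  show "infinite h"
  proof
    assume fh: "finite h"
    define n where "n = Suc (Max (insert 0 ((\<lambda>x. gdist Y E x u) ` h)))"
    obtain x where x: "x \<in> h" "\<forall>y\<in>carrier_vertices H. gdist Y E x y \<ge> n"
      using dp unfolding deep_def by blast
    have "gdist Y E x u \<ge> n" using x C by blast
    moreover have "gdist Y E x u \<le> Max (insert 0 ((\<lambda>x. gdist Y E x u) ` h))"
      using fh x(1) by (intro Max_ge) auto
    ultimately show False unfolding n_def by linarith
  qed
next
  assume inf: "infinite h"
  interpret Ym: mg Y E by (rule mgY)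
  show "deep Y E H h"
    unfolding deep_def
  proof
    fix n :: nat
    define B where "B = (\<Union>c\<in>C. {w\<in>Y. gdist Y E c w \<le> n})"
    have "finite B" unfolding B_def using C ball_fin by blast
    then have "infinite (h - B)" using inf by (metis Diff_infinite_finite)
    then have "h - B \<noteq> {}" by (metis finite.emptyI)
    then obtain x where x: "x \<in> h" "x \<notin> B" by blast
    have "\<forall>y\<in>carrier_vertices H. gdist Y E x y \<ge> n"
    proof
      fix y assume "y \<in> carrier_vertices H"
      then have y: "y \<in> C" using C by simp
      then have "\<not> gdist Y E y x \<le> n" using x h unfolding B_def by blast
      moreover have "gdist Y E y x = gdist Y E x y" using Ym.dist_sym y C x h by blast
      ultimately show "gdist Y E x y \<ge> n" by simp
    qed
    then show "\<exists>x\<in>h. \<forall>y\<in>carrier_vertices H. n \<le> gdist Y E x y" using x by blast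
  qed
qed

end


locale qh = qs +
  fixes u v
  assumes uY: "u \<in> Y" and vY: "v \<in> Y" and Euv: "E u v"
begin

sublocale Hm: mgH Y E u v
  using mgY uY vY Euv by (simp add: mgH_def mgH_axioms_def)

abbreviation "HH \<equiv> Hm.H"

definition invH :: "int \<Rightarrow> bool" where "invH m \<longleftrightarrow> (\<forall>e\<in>HH. A m ` e \<in> HH)"

lemma H_sub: "e \<in> HH \<Longrightarrow> e \<subseteq> Y"
  using Hm.H_edge by blast

lemma H_fin: "e \<in> HH \<Longrightarrow> finite e"
  using Hm.H_edge by blast

lemma A_img_comp: "S \<subseteq> V \<Longrightarrow> A a ` (A b ` S) = A (a + b) ` S"
proof -
  assume S: "S \<subseteq> V"
  have "\<forall>x\<in>S. A (a + b) x = A a (A b x)" using A_add S by blast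
  then show ?thesis by (simp add: image_image)
qed

lemma A_img_0: "S \<subseteq> V \<Longrightarrow> A 0 ` S = S"
proof -
  assume S: "S \<subseteq> V"
  have h0: "\<forall>x\<in>S. A 0 x = x" using A_0 S by blast
  have "A 0 ` S = (\<lambda>x. x) ` S" by (rule image_cong) (use h0 in auto)
  then show ?thesis by simp
qed

lemma inv_from: assumes e1: "e1 \<in> HH" "A m ` e1 \<in> HH" shows "invH m"
  unfolding invH_def
proof
  fix e assume e: "e \<in> HH"
  have r0: "(elem_parallel Y E)\<^sup>*\<^sup>* {u, v} e" "(elem_parallel Y E)\<^sup>*\<^sup>* {u, v} e1"
      "(elem_parallel Y E)\<^sup>*\<^sup>* {u, v} (A m ` e1)"
    using e e1 by (auto simp: Hm.H_def)
  have "(elem_parallel Y E)\<^sup>*\<^sup>* e1 {u, v}"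
    using rtranclp_sym_rel[of "elem_parallel Y E", OF Hm.par_sym r0(2)] .
  then have "(elem_parallel Y E)\<^sup>*\<^sup>* e1 e" using r0(1) by (rule rtranclp_trans)
  then have "(elem_parallel Y E)\<^sup>*\<^sup>* (A m ` e1) (A m ` e)" by (rule rt_A)
  then have "(elem_parallel Y E)\<^sup>*\<^sup>* {u, v} (A m ` e)" using r0(3) by (meson rtranclp_trans)
  then show "A m ` e \<in> HH" by (simp add: Hm.H_def)
qed

lemma inv_add: assumes "invH a" "invH b" shows "invH (a + b)"
  unfolding invH_def
proof
  fix e assume e: "e \<in> HH"
  have "e \<subseteq> V" using H_sub e YV by blast
  then have "A (a + b) ` e = A a ` (A b ` e)" using A_img_comp by simp
  then show "A (a + b) ` e \<in> HH" using assms e unfolding invH_def by simp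
qed

lemma inv_0: "invH 0"
  unfolding invH_def using A_img_0 H_sub YV by (metis subset_trans)

lemma inv_mult_nat: assumes "invH k" shows "invH (k * int j)"
proof (induction j)
  case 0 then show ?case using inv_0 by simp
next
  case (Suc j)
  have "k * int (Suc j) = k + k * int j" by (simp add: algebra_simps)
  then show ?case using inv_add[OF assms Suc.IH] by simp
qed

lemma inv_mult: assumes "invH k" "invH (- k)" shows "invH (k * q)"
proof (cases "q \<ge> 0")
  case True
  then have eq: "k * q = k * int (nat q)" by simp
  show ?thesis using inv_mult_nat[OF assms(1), of "nat q"] unfolding eq[symmetric] .
next
  case False
  then have eq: "k * q = (- k) * int (nat (- q))" by simp
  show ?thesis using inv_mult_nat[OF assms(2), of "nat (- q)"] unfolding eq[symmetric] .
qed

lemma inv_carrier: "invH m \<Longrightarrow> c \<in> \<Union>HH \<Longrightarrow> A m c \<in> \<Union>HH"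
  unfolding invH_def by blast

lemma comp_map:
  assumes inv: "invH m" "invH (- m)" and x: "x \<in> Hm.comp y" and y: "y \<in> Y"
  shows "A m x \<in> Hm.comp (A m y)"
proof -
  obtain xs where xs: "is_path Y (\<lambda>a b. E a b \<and> {a, b} \<notin> HH) xs" "hd xs = y" "last xs = x"
    using x by (auto simp: Hm.comp_def)
  have step: "E (A m a) (A m b) \<and> {A m a, A m b} \<notin> HH" if ab: "a \<in> Y" "b \<in> Y" "E a b \<and> {a, b} \<notin> HH" for a b
  proof
    show "E (A m a) (A m b)" using A_E ab YV by blast
    show "{A m a, A m b} \<notin> HH"
    proof
      assume "{A m a, A m b} \<in> HH"
      then have "A (- m) ` {A m a, A m b} \<in> HH" using inv(2) unfolding invH_def by blast
      moreover have "A (- m) ` {A m a, A m b} = {a, b}" using A_inv ab YV by auto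
      ultimately show False using ab by simp
    qed
  qed
  have "is_path Y (\<lambda>a b. E a b \<and> {a, b} \<notin> HH) (map (A m) xs)"
    by (rule is_path_map[OF xs(1)]) (use A_Ymem step in auto)
  moreover have "xs \<noteq> []" using xs(1) by (simp add: is_path_def)
  moreover have "A m x \<in> Y" using x Hm.comp_sub A_Ymem by blast
  ultimately show ?thesis using xs unfolding Hm.comp_def by (auto simp: hd_map last_map)
qed

lemma comp_iter:
  assumes inv: "\<And>q. invH (L * q)" and L: "A L x \<in> Hm.comp x" and x: "x \<in> Y"
  shows "A (L * int j) x \<in> Hm.comp x"
proof (induction j)
  case 0
  have "A 0 x = x" using A_0 x YV by blast
  then show ?case using Hm.comp_refl x by simp
next
  case (Suc j)
  have xV: "x \<in> V" using x YV by blast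
  have e: "L * int (Suc j) = L + L * int j" by (simp add: algebra_simps)
  have "A (L * int (Suc j)) x = A L (A (L * int j) x)" unfolding e using A_add[OF xV] .
  moreover have "invH L" "invH (- L)" using inv[of 1] inv[of "-1"] by simp_all
  then have "A L (A (L * int j) x) \<in> Hm.comp (A L x)" using comp_map Suc.IH x by blast
  moreover have "Hm.comp (A L x) = Hm.comp x" using Hm.comp_eq L x by blast
  ultimately show ?case by simp
qed

lemma comp_infinite:
  assumes inv: "\<And>q. invH (L * q)" and L: "A L x \<in> Hm.comp x" "L \<noteq> 0" and x: "x \<in> Y"
  shows "infinite (Hm.comp x)"
proof
  assume fin: "finite (Hm.comp x)"
  have xV: "x \<in> V" using x YV by blast
  have "inj (\<lambda>j::nat. A (L * int j) x)"
  proof (rule injI)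
    fix i j :: nat assume h: "A (L * int i) x = A (L * int j) x"
    have "A (L * int i - L * int j) (A (L * int j) x) = A (L * int j) x"
      using A_add[OF xV, of "L * int i - L * int j" "L * int j"] h by simp
    then have "\<phi> [^]\<^bsub>G\<^esub> (L * int i - L * int j) = \<one>\<^bsub>G\<^esub>" using free_fix A_V xV by blast
    then have "L * int i - L * int j = 0" using torsion_free x by blast
    then have "L * (int i - int j) = 0" by (simp add: algebra_simps)
    then show "i = j" using L(2) by simp
  qed
  moreover have "range (\<lambda>j::nat. A (L * int j) x) \<subseteq> Hm.comp x" using comp_iter[OF inv L(1) x] by blast
  then have "finite (range (\<lambda>j::nat. A (L * int j) x))" using fin finite_subset by blast
  ultimately have "finite (UNIV :: nat set)" using finite_imageD by blast
  then show False by simp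
qed


lemma hs: "halfspaces Y E HH = {Hm.comp u, Hm.comp v}"
proof -
  have "halfspaces Y E HH = (\<lambda>x. Hm.comp x) ` Y" unfolding halfspaces_def Hm.comp_def by blast
  also have "\<dots> = {Hm.comp u, Hm.comp v}"
  proof
    show "(\<lambda>x. Hm.comp x) ` Y \<subseteq> {Hm.comp u, Hm.comp v}" using Hm.comp_two by blast
    show "{Hm.comp u, Hm.comp v} \<subseteq> (\<lambda>x. Hm.comp x) ` Y" using uY vY by blast
  qed
  finally show ?thesis .
qed

lemma Yinf: "infinite Y"
  using Y_inf[OF torsion_free uY] uY by blast

lemma finite_case:
  assumes fC: "finite (\<Union>HH)"
  shows "(trivial_hyp Y E HH \<longleftrightarrow> hyp_diam Y E HH = \<infinity>)
       \<and> (half_essential Y E HH \<longleftrightarrow> (\<exists>h\<in>halfspaces Y E HH. compact_subcomplex h))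
       \<and> (essential Y E HH \<longleftrightarrow> hyp_diam Y E HH < \<infinity> \<and>
                               (\<forall>h\<in>halfspaces Y E HH. \<not> compact_subcomplex h))"
proof -
  define C where "C = \<Union>HH"
  have CY: "C \<subseteq> Y" using H_sub by (auto simp: C_def)
  have uC: "u \<in> C" using Hm.uv_H by (auto simp: C_def)
  have finC: "finite C" using fC by (simp add: C_def)
  have cv: "carrier_vertices HH = C" by (simp add: carrier_vertices_def C_def)
  have dI: "deep Y E HH h \<longleftrightarrow> infinite h" if "h \<in> halfspaces Y E HH" for h
  proof -
    have "h \<subseteq> Y" using that hs Hm.comp_sub by auto
    then show ?thesis using deep_iff[OF cv finC uC CY] by blast
  qed
  define M where "M = Max ((\<lambda>p. gdist Y E (fst p) (snd p)) ` (C \<times> C))"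
  have "hyp_diam Y E HH \<le> enat M"
    unfolding hyp_diam_def cv
  proof (intro SUP_least)
    fix x y assume "x \<in> C" "y \<in> C"
    then have "gdist Y E x y \<le> M" unfolding M_def using finC by (intro Max_ge) force+
    then show "enat (gdist Y E x y) \<le> enat M" by simp
  qed
  then have diam: "hyp_diam Y E HH < \<infinity>" by (metis enat_ord_simps(4) infinity_ileE le_less_trans not_less_iff_gr_or_eq)
  have "Y = Hm.comp u \<union> Hm.comp v" using Hm.comp_cases Hm.comp_sub by blast
  then have "infinite (Hm.comp u) \<or> infinite (Hm.comp v)" using Yinf by (metis finite_Un)
  then have exinf: "\<exists>h\<in>halfspaces Y E HH. infinite h" using hs by auto
  show ?thesis
    unfolding trivial_hyp_def half_essential_def essential_def compact_subcomplex_def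
    using dI diam exinf by auto
qed

lemma infinite_case:
  assumes iC: "infinite (\<Union>HH)"
  shows "(trivial_hyp Y E HH \<longleftrightarrow> hyp_diam Y E HH = \<infinity>)
       \<and> (half_essential Y E HH \<longleftrightarrow> (\<exists>h\<in>halfspaces Y E HH. compact_subcomplex h))
       \<and> (essential Y E HH \<longleftrightarrow> hyp_diam Y E HH < \<infinity> \<and>
                               (\<forall>h\<in>halfspaces Y E HH. \<not> compact_subcomplex h))"
proof -
  define C where "C = \<Union>HH"
  have CY: "C \<subseteq> Y" using H_sub by (auto simp: C_def)
  have uC: "u \<in> C" using Hm.uv_H by (auto simp: C_def)
  have cv: "carrier_vertices HH = C" by (simp add: carrier_vertices_def C_def)
  have infC: "infinite C" using iC by (simp add: C_def)
  have diam: "hyp_diam Y E HH = \<infinity>"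
  proof (rule ccontr)
    assume "hyp_diam Y E HH \<noteq> \<infinity>"
    then obtain B where B: "hyp_diam Y E HH = enat B" by (cases "hyp_diam Y E HH") auto
    have "C \<subseteq> {w\<in>Y. gdist Y E u w \<le> B}"
    proof
      fix y assume y: "y \<in> C"
      have "enat (gdist Y E u y) \<le> (SUP y\<in>C. enat (gdist Y E u y))" using y by (rule SUP_upper)
      also have "\<dots> \<le> (SUP x\<in>C. SUP y\<in>C. enat (gdist Y E x y))" using uC by (rule SUP_upper2) simp
      finally have "enat (gdist Y E u y) \<le> enat B" using B unfolding hyp_diam_def cv by simp
      then show "y \<in> {w\<in>Y. gdist Y E u w \<le> B}" using y CY by auto
    qed
    then show False using ball_fin[OF uY] infC finite_subset by blast
  qed
  have Hinf: "infinite HH"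
  proof
    assume "finite HH"
    then have "finite C" unfolding C_def using H_fin by blast
    then show False using infC by simp
  qed
  obtain R1 where R1: "finite R1" "\<forall>e\<in>R1. e \<subseteq> Y \<and> finite e"
      "\<forall>a\<in>Y. \<forall>b\<in>Y. E a b \<longrightarrow> (\<exists>e\<in>R1. \<exists>n. {a, b} = A n ` e)"
    using edge_reps by blast
  have repex: "\<exists>r\<in>R1. \<exists>n. e = A n ` r" if e: "e \<in> HH" for e
  proof -
    obtain x y where "e = {x, y}" "x \<in> Y" "y \<in> Y" "E x y" using Hm.H_edge e by blast
    then show ?thesis using R1(3) by blast
  qed
  define \<rho> where "\<rho> e = (SOME r. r \<in> R1 \<and> (\<exists>n. e = A n ` r))" for e
  have \<rho>: "\<rho> e \<in> R1 \<and> (\<exists>n. e = A n ` \<rho> e)" if "e \<in> HH" for e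
    unfolding \<rho>_def by (rule someI_ex) (use repex[OF that] in blast)
  have "\<not> inj_on \<rho> HH"
  proof
    assume "inj_on \<rho> HH"
    moreover have "finite (\<rho> ` HH)" using \<rho> R1(1) finite_subset[of "\<rho> ` HH" R1] by blast
    ultimately show False using Hinf finite_imageD by blast
  qed
  then obtain e1 e2 where e12: "e1 \<in> HH" "e2 \<in> HH" "e1 \<noteq> e2" "\<rho> e1 = \<rho> e2" unfolding inj_on_def by blast
  obtain n1 where n1: "e1 = A n1 ` \<rho> e1" using \<rho> e12 by blast
  obtain n2 where n2': "e2 = A n2 ` \<rho> e2" using \<rho>[OF e12(2)] by blast
  have n2: "e2 = A n2 ` \<rho> e1" using n2' e12(4) by simp
  have rV: "\<rho> e1 \<subseteq> V" using \<rho> e12 R1(2) YV by blast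
  define k where "k = n2 - n1"
  have ke: "A k ` e1 = e2" using n1 n2 A_img_comp[OF rV, of k n1] by (simp add: k_def)
  have k0: "k \<noteq> 0"
  proof
    assume "k = 0" then have "n2 = n1" by (simp add: k_def)
    then have "e2 = A n1 ` \<rho> e1" using n2 by simp
    also have "\<dots> = e1" by (rule n1[symmetric])
    finally show False using e12(3) by simp
  qed
  have e1V: "e1 \<subseteq> V" using H_sub e12 YV by blast
  have invk: "invH k" using inv_from e12 ke by blast
  have "A (- k) ` e2 = e1" using ke A_img_comp[OF e1V, of "- k" k] A_img_0[OF e1V] by simp
  then have invmk: "invH (- k)" using inv_from e12 by metis
  have invkq: "invH (k * q)" for q using inv_mult[OF invk invmk] .
  define K where "K = \<bar>k\<bar>"
  have Kpos: "K > 0" using k0 by (simp add: K_def)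
  have invK: "invH (K * q)" for q
  proof (cases "k > 0")
    case True then show ?thesis using invkq by (simp add: K_def)
  next
    case False
    then have "K * q = k * (- q)" by (simp add: K_def)
    then show ?thesis using invkq[of "- q"] by simp
  qed
  obtain R where R: "finite R" "R \<subseteq> Y" "\<forall>y\<in>Y. \<exists>r\<in>R. \<exists>n. y = A n r" using vertex_reps by blast
  define Bd where "Bd = Max ((\<lambda>p. gdist Y E (A (snd p) (fst p)) u) ` (R \<times> {0..<K}))"
  have close: "\<exists>c\<in>C. gdist Y E x c \<le> Bd" if x: "x \<in> Y" for x
  proof -
    obtain r n where rn: "r \<in> R" "x = A n r" using R x by blast
    have rV: "r \<in> V" using rn R YV by blast
    define s where "s = n mod K"
    define q where "q = n div K"
    have nq: "n = K * q + s" unfolding s_def q_def by simp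
    have s: "s \<in> {0..<K}" using Kpos by (simp add: s_def)
    have xe: "x = A (K * q) (A s r)" using rn A_add[OF rV, of "K * q" s] nq by simp
    have cC: "A (K * q) u \<in> C" using inv_carrier[OF invK] uC by (simp add: C_def)
    have asY: "A s r \<in> Y" using A_Ymem rn R by blast
    have "gdist Y E x (A (K * q) u) = gdist Y E (A s r) u"
      unfolding xe using Hm.aut_dist[OF A_aut asY uY] .
    also have "\<dots> \<le> Bd" unfolding Bd_def using R(1) rn s by (intro Max_ge) force+
    finally show ?thesis using cC by blast
  qed
  have nd: "\<not> deep Y E HH h" if h: "h \<in> halfspaces Y E HH" for h
  proof
    assume "deep Y E HH h"
    then obtain x where x: "x \<in> h" "\<forall>y\<in>carrier_vertices HH. Suc Bd \<le> gdist Y E x y"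
      unfolding deep_def by blast
    have "h \<subseteq> Y" using h hs Hm.comp_sub by blast
    then have "x \<in> Y" using x by blast
    then obtain c where "c \<in> C" "gdist Y E x c \<le> Bd" using close by blast
    then show False using x cv by fastforce
  qed
  have uvK: "{A K u, A K v} \<in> HH" using invK[of 1] Hm.uv_H unfolding invH_def by force
  obtain p q where pq: "{A K u, A K v} = {p, q}" "p \<in> Hm.comp u" "q \<in> Hm.comp v" using Hm.H_comps[OF uvK] by blast
  have invKm: "invH K" "invH (- K)" using invK[of 1] invK[of "-1"] by simp_all
  have infs: "infinite (Hm.comp u) \<and> infinite (Hm.comp v)"
  proof (cases "A K u = p")
    case True
    then have "A K v = q" using pq(1) by (auto simp: doubleton_eq_iff)
    then show ?thesis using comp_infinite[OF invK _ _ uY, of ] comp_infinite[OF invK _ _ vY] True pq Kpos by auto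
  next
    case False
    then have ab: "A K u = q" "A K v = p" using pq(1) by (auto simp: doubleton_eq_iff)
    have i2: "invH ((K + K) * q)" for q using invK[of "2 * q"] by (simp add: algebra_simps)
    have uV: "u \<in> V" "v \<in> V" using uY vY YV by auto
    have "A K (A K u) \<in> Hm.comp (A K v)" using comp_map[OF invKm, of "A K u" v] ab pq vY by simp
    moreover have "Hm.comp (A K v) = Hm.comp u" using Hm.comp_eq ab pq uY by blast
    moreover have "A (K + K) u = A K (A K u)" using A_add uV by blast
    ultimately have u2: "A (K + K) u \<in> Hm.comp u" by simp
    have "A K (A K v) \<in> Hm.comp (A K u)" using comp_map[OF invKm, of "A K v" u] ab pq uY by simp
    moreover have "Hm.comp (A K u) = Hm.comp v" using Hm.comp_eq ab pq vY by blast
    moreover have "A (K + K) v = A K (A K v)" using A_add uV by blast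
    ultimately have v2: "A (K + K) v \<in> Hm.comp v" by simp
    have "K + K \<noteq> 0" using Kpos by simp
    then show ?thesis using comp_infinite[OF i2 u2 _ uY] comp_infinite[OF i2 v2 _ vY] by blast
  qed
  have allinf: "\<forall>h\<in>halfspaces Y E HH. infinite h" using infs hs by auto
  have nd': "\<forall>h\<in>halfspaces Y E HH. \<not> deep Y E HH h" using nd by blast
  have ne: "halfspaces Y E HH \<noteq> {}" using hs by simp
  show ?thesis
    unfolding trivial_hyp_def half_essential_def essential_def compact_subcomplex_def
    using diam nd' allinf ne by auto
qed

lemma main_qh:
  "(trivial_hyp Y E HH \<longleftrightarrow> hyp_diam Y E HH = \<infinity>)
       \<and> (half_essential Y E HH \<longleftrightarrow> (\<exists>h\<in>halfspaces Y E HH. compact_subcomplex h))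
       \<and> (essential Y E HH \<longleftrightarrow> hyp_diam Y E HH < \<infinity> \<and>
                               (\<forall>h\<in>halfspaces Y E HH. \<not> compact_subcomplex h))"
  using finite_case infinite_case by blast

end


theorem lemma5p5:
  fixes G :: "('g, 'b) monoid_scheme"
    and V :: "'v set" and E :: "'v \<Rightarrow> 'v \<Rightarrow> bool" and act :: "'g \<Rightarrow> 'v \<Rightarrow> 'v"
    and Y :: "'v set" and \<phi> :: 'g and H :: "'v set set"
  assumes "universal_cover_of_compact_npc G V E act"
    and "quasiline G V E act Y \<phi>"
    and "H \<in> hyperplanes Y E"
  shows "(trivial_hyp Y E H \<longleftrightarrow> hyp_diam Y E H = \<infinity>)
       \<and> (half_essential Y E H \<longleftrightarrow> (\<exists>h\<in>halfspaces Y E H. compact_subcomplex h))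
       \<and> (essential Y E H \<longleftrightarrow> hyp_diam Y E H < \<infinity> \<and>
                               (\<forall>h\<in>halfspaces Y E H. \<not> compact_subcomplex h))"
proof -
  have q: "qs G V E act Y \<phi>" using assms(1,2) by (simp add: qs_def)
  obtain e0 where e0: "e0 \<in> edges Y E" "H = {e'. (elem_parallel Y E)\<^sup>*\<^sup>* e0 e'}"
    using assms(3) unfolding hyperplanes_def by blast
  obtain u v where uv: "e0 = {u, v}" "u \<in> Y" "v \<in> Y" "E u v" using e0(1) unfolding edges_def by blast
  have qh: "qh G V E act Y \<phi> u v" using q uv by (simp add: qh_def qh_axioms_def)
  have mh: "mgH Y E u v" using qs.mgY[OF q] uv by (simp add: mgH_def mgH_axioms_def)
  have "H = mgH.H Y E u v" using e0(2) uv(1) mgH.H_def[OF mh] by simp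
  then show ?thesis using qh.main_qh[OF qh] by simp
qed


end
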